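(* Let $s\ge1$ and let $\mathcal{G}_{2s}\subset GL_{2s}(\mathbb{Z})$ be the group generated by the linear maps $\sigma_1,\dotsc,\sigma_{2s}$ of $\mathbb{Z}^{2s}$ given in coordinates $k=(k_1,\dotsc,k_{2s})$ by \[ \sigma_1:\ k_1\mapsto k_1,\quad k_j\mapsto k_j+k_1\ (j>1); \] \[ \sigma_i\ (2\le i\le 2s):\ k_{i-1}\mapsto 2k_{i-1}-k_i,\quad k_i\mapsto k_{i-1},\quad k_j\mapsto k_j\ (j\ne i-1,i). \] For nonzero $k\in\mathbb{Z}^{2s}$ put $\gamma(k)=\gcd(k_1,\dotsc,k_{2s})$, $\alpha(k)=\#\{i:\ k_i/\gamma(k)\equiv1\pmod2\}$ and $\delta(k)=|2\alpha(k)-2s-1|$. Then the map $k\mapsto(\gamma(k),\delta(k))$ induces a bijection between the set of orbits of $\mathcal{G}_{2s}$ on $\mathbb{Z}^{2s}\setminus\{0\}$ and the set of pairs $(\gamma,\delta)$ with $\gamma\in\mathbb{Z}_{>0}$ and $\delta\in\{1,3,5,\dotsc,2s-1\}$. *)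

theory Defs
  imports Main
begin

text \<open>Vectors of Z^n, coordinates indexed 1..n, zero outside.\<close>
definition vecs :: "nat \<Rightarrow> (nat \<Rightarrow> int) set" where
  "vecs n = {k. \<forall>j. j \<notin> {1..n} \<longrightarrow> k j = 0}"

definition sigma :: "nat \<Rightarrow> nat \<Rightarrow> (nat \<Rightarrow> int) \<Rightarrow> (nat \<Rightarrow> int)" where
  "sigma n i k =
     (if i = 1 then (\<lambda>j. if 1 < j \<and> j \<le> n then k j + k 1 else k j)
      else (\<lambda>j. if j = i - 1 then 2 * k (i - 1) - k i
                else if j = i then k (i - 1) else k j))"

inductive_set grp :: "nat \<Rightarrow> ((nat \<Rightarrow> int) \<Rightarrow> (nat \<Rightarrow> int)) set" for n where
  grp_id: "id \<in> grp n"
| grp_gen: "g \<in> grp n \<Longrightarrow> i \<in> {1..n} \<Longrightarrow> sigma n i \<circ> g \<in> grp n"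
| grp_inv: "g \<in> grp n \<Longrightarrow> i \<in> {1..n} \<Longrightarrow> inv_into (vecs n) (sigma n i) \<circ> g \<in> grp n"

definition orbit :: "nat \<Rightarrow> (nat \<Rightarrow> int) \<Rightarrow> (nat \<Rightarrow> int) set" where
  "orbit n k = {g k | g. g \<in> grp n}"

definition orbits :: "nat \<Rightarrow> (nat \<Rightarrow> int) set set" where
  "orbits n = orbit n ` (vecs n - {\<lambda>_. 0})"

definition gam :: "nat \<Rightarrow> (nat \<Rightarrow> int) \<Rightarrow> int" where
  "gam n k = Gcd (k ` {1..n})"

definition alph :: "nat \<Rightarrow> (nat \<Rightarrow> int) \<Rightarrow> nat" where
  "alph n k = card {i \<in> {1..n}. odd (k i div gam n k)}"

definition delt :: "nat \<Rightarrow> (nat \<Rightarrow> int) \<Rightarrow> int" where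
  "delt s k = \<bar>2 * int (alph (2*s) k) - 2 * int s - 1\<bar>"

end

theory Submission
  imports Defs
begin

definition mv :: "nat \<Rightarrow> int \<Rightarrow> (nat \<Rightarrow> int) \<Rightarrow> (nat \<Rightarrow> int)" where
  "mv i m x = (\<lambda>j. if j = i - 1 \<or> j = i then x j + m * (x (i - 1) - x i) else x j)"

lemma mv_add: "1 \<le> i \<Longrightarrow> mv i a (mv i b x) = mv i (a + b) x"
  unfolding mv_def by (rule ext) (auto simp: algebra_simps)

lemma mv_0: "mv i 0 x = x"
  unfolding mv_def by auto

inductive rch :: "nat \<Rightarrow> (nat \<Rightarrow> int) \<Rightarrow> (nat \<Rightarrow> int) \<Rightarrow> bool" for n where
  rch_refl: "rch n x x"
| rch_step: "rch n x y \<Longrightarrow> 1 \<le> i \<Longrightarrow> i \<le> n \<Longrightarrow> e = 1 \<or> e = -1 \<Longrightarrow> rch n x (mv i e y)"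

lemma rch_trans: "rch n y z \<Longrightarrow> rch n x y \<Longrightarrow> rch n x z"
  by (induction rule: rch.induct) (auto intro: rch.intros)

lemma rch_sym: "rch n x y \<Longrightarrow> rch n y x"
proof (induction rule: rch.induct)
  case (rch_refl) then show ?case by (rule rch.rch_refl)
next
  case (rch_step x y i e)
  have "mv i (-e) (mv i e y) = y" using rch_step by (simp add: mv_add mv_0)
  moreover have "rch n (mv i e y) (mv i (-e) (mv i e y))"
    using rch_step by (intro rch.rch_step[OF rch.rch_refl]) auto
  ultimately have "rch n (mv i e y) y" by simp
  then show ?case using rch_step rch_trans by blast
qed

lemma rch_mv_nat: "rch n x y \<Longrightarrow> 1 \<le> i \<Longrightarrow> i \<le> n \<Longrightarrow> rch n x (mv i (int k) y) \<and> rch n x (mv i (- int k) y)"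
proof (induction k)
  case 0 then show ?case by (simp add: mv_0)
next
  case (Suc k)
  have a: "mv i (int (Suc k)) y = mv i 1 (mv i (int k) y)" using Suc by (simp add: mv_add)
  have b: "mv i (- int (Suc k)) y = mv i (-1) (mv i (- int k) y)" using Suc by (simp add: mv_add)
  have IH: "rch n x (mv i (int k) y)" "rch n x (mv i (- int k) y)" using Suc by auto
  have "rch n x (mv i 1 (mv i (int k) y))" by (rule rch.rch_step[OF IH(1)]) (use Suc in auto)
  moreover have "rch n x (mv i (-1) (mv i (- int k) y))" by (rule rch.rch_step[OF IH(2)]) (use Suc in auto)
  ultimately show ?case unfolding a b by blast
qed

lemma rch_mv: assumes "rch n x y" "1 \<le> i" "i \<le> n" shows "rch n x (mv i m y)"
proof (cases "m \<ge> 0")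
  case True
  then have "m = int (nat m)" by simp
  then show ?thesis using rch_mv_nat assms by metis
next
  case False
  then have "m = - int (nat (-m))" by simp
  then show ?thesis using rch_mv_nat assms by metis
qed

lemma rch_mono: "rch m x y \<Longrightarrow> m \<le> n \<Longrightarrow> rch n x y"
  by (induction rule: rch.induct) (auto intro: rch.intros)

lemma rch_out: "rch n x y \<Longrightarrow> n < j \<Longrightarrow> y j = x j"
  by (induction rule: rch.induct) (auto simp: mv_def)

definition alt :: "nat \<Rightarrow> (nat \<Rightarrow> int) \<Rightarrow> int" where
  "alt r x = (\<Sum>i\<le>r. (-1)^i * x i)"

definition nodd :: "nat \<Rightarrow> (nat \<Rightarrow> int) \<Rightarrow> nat" where
  "nodd r x = card {i. i \<le> r \<and> odd (x i)}"

definition prim :: "nat \<Rightarrow> (nat \<Rightarrow> int) \<Rightarrow> bool" where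
  "prim r x = (\<forall>d. (\<forall>i\<le>r. d dvd x i - x 0) \<longrightarrow> d dvd 1)"

lemma alt_cong: "(\<And>i. i \<le> r \<Longrightarrow> x i = y i) \<Longrightarrow> alt r x = alt r y"
  unfolding alt_def by (rule sum.cong) auto

lemma nodd_cong: "(\<And>i. i \<le> r \<Longrightarrow> x i = y i) \<Longrightarrow> nodd r x = nodd r y"
  unfolding nodd_def by (rule arg_cong[where f=card]) auto

lemma prim_cong: "(\<And>i. i \<le> r \<Longrightarrow> x i = y i) \<Longrightarrow> prim r x = prim r y"
  unfolding prim_def by auto

lemma alt_Suc: "alt (Suc r) x = alt r x + (-1)^(Suc r) * x (Suc r)"
  unfolding alt_def by simp

lemma alt_plus2: "even r \<Longrightarrow> alt (r + 2) x = alt r x - x (r + 1) + x (r + 2)"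
  using alt_Suc[of "Suc r" x] alt_Suc[of r x] by simp

lemma nodd_Suc: "nodd (Suc r) x = nodd r x + (if odd (x (Suc r)) then 1 else 0)"
proof -
  have "{i. i \<le> Suc r \<and> odd (x i)} = {i. i \<le> r \<and> odd (x i)} \<union> (if odd (x (Suc r)) then {Suc r} else {})"
    by (auto simp: le_Suc_eq)
  then show ?thesis unfolding nodd_def by (simp add: card_insert_if)
qed

lemma nodd_plus2: "nodd (r + 2) x = nodd r x + (if odd (x (r + 1)) then 1 else 0) + (if odd (x (r + 2)) then 1 else 0)"
  using nodd_Suc[of "Suc r" x] nodd_Suc[of r x] by simp

lemma nodd_le: "nodd r x \<le> Suc r"
proof -
  have "card {i. i \<le> r \<and> odd (x i)} \<le> card {..r}" by (rule card_mono) auto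
  then show ?thesis unfolding nodd_def by simp
qed

lemma alt_nodd_parity: "even (alt r x - int (nodd r x))"
proof (induction r)
  case 0
  show ?case
  proof (cases "odd (x 0)")
    case True
    then have H: "{i. i \<le> 0 \<and> odd (x i)} = {0}" by auto
    show ?thesis using True unfolding nodd_def H by (simp add: alt_def)
  next
    case False
    then have H: "{i. i \<le> 0 \<and> odd (x i)} = {}" by (metis (mono_tags, lifting) Collect_empty_eq le_zero_eq)
    show ?thesis using False unfolding nodd_def H by (simp add: alt_def)
  qed
next
  case (Suc r)
  have E: "even ((-1)^(Suc r) * x (Suc r) - (if odd (x (Suc r)) then 1 else 0))"
    by (cases "even r") auto
  have "alt (Suc r) x - int (nodd (Suc r) x) = (alt r x - int (nodd r x)) + ((-1)^(Suc r) * x (Suc r) - (if odd (x (Suc r)) then 1 else 0))"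
    unfolding alt_Suc nodd_Suc by simp
  then show ?case using Suc E by simp
qed

lemma prim_nodd: assumes "prim r x" shows "1 \<le> nodd r x" "nodd r x \<le> r"
proof -
  show "1 \<le> nodd r x"
  proof (rule ccontr)
    assume "\<not> 1 \<le> nodd r x"
    have fin: "finite {i. i \<le> r \<and> odd (x i)}" by (rule finite_subset[of _ "{..r}"]) auto
    have "card {i. i \<le> r \<and> odd (x i)} = 0" using \<open>\<not> 1 \<le> nodd r x\<close> unfolding nodd_def by linarith
    then have "{i. i \<le> r \<and> odd (x i)} = {}" using fin card_0_eq by blast
    then have ev: "\<forall>i\<le>r. even (x i)" by blast
    then have "\<forall>i\<le>r. (2::int) dvd x i - x 0" by auto
    then show False using assms unfolding prim_def by fastforce
  qed
  show "nodd r x \<le> r"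
  proof (rule ccontr)
    assume "\<not> nodd r x \<le> r"
    then have "card {i. i \<le> r \<and> odd (x i)} = card {..r}" using nodd_le[of r x] unfolding nodd_def by simp
    then have "{i. i \<le> r \<and> odd (x i)} = {..r}" by (intro card_subset_eq) auto
    then have "\<forall>i\<le>r. odd (x i)" by auto
    then have "\<forall>i\<le>r. (2::int) dvd x i - x 0" by auto
    then show False using assms unfolding prim_def by fastforce
  qed
qed

lemma prim_unit: assumes "1 \<le> k" "k \<le> r" "x (k - 1) - x k = 1 \<or> x k - x (k - 1) = 1"
  shows "prim r x"
  unfolding prim_def
proof (intro allI impI)
  fix d assume H: "\<forall>i\<le>r. d dvd x i - x 0"
  have "d dvd x (k-1) - x 0" "d dvd x k - x 0" using H assms by auto
  from dvd_diff[OF this] have "d dvd (x (k-1) - x 0) - (x k - x 0)" .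
  then have a: "d dvd x (k - 1) - x k" by simp
  then have b: "d dvd x k - x (k - 1)" by (metis dvd_minus_iff minus_diff_eq)
  show "d dvd 1" using assms(3) a b by metis
qed

lemma alt_mv: assumes "1 \<le> i" "i \<le> r" shows "alt r (mv i m x) = alt r x"
proof -
  define D where "D = m * (x (i - 1) - x i)"
  have eq: "mv i m x = (\<lambda>j. x j + (if j = i - 1 \<or> j = i then D else 0))"
    unfolding mv_def D_def by auto
  have "alt r (mv i m x) = alt r x + (\<Sum>j\<le>r. (-1)^j * (if j = i - 1 \<or> j = i then D else 0))"
    unfolding eq alt_def by (simp add: algebra_simps sum.distrib)
  also have "(\<Sum>j\<le>r. (-1)^j * (if j = i - 1 \<or> j = i then D else 0)) = (\<Sum>j\<in>{j\<in>{..r}. j = i - 1 \<or> j = i}. (-1)^j * D)"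
    by (subst sum.inter_filter) (auto intro: sum.cong)
  also have "{j\<in>{..r}. j = i - 1 \<or> j = i} = {i - 1, i}" using assms by auto
  also have "(\<Sum>j\<in>{i - 1, i}. (-1)^j * D) = (-1)^(i-1) * D + (-1)^i * D" using assms by simp
  also have "\<dots> = 0"
  proof -
    have "(-1::int)^i = - ((-1)^(i-1))" using assms by (cases i) auto
    then show ?thesis by simp
  qed
  finally show ?thesis by simp
qed

definition swp :: "nat \<Rightarrow> nat \<Rightarrow> nat" where
  "swp i j = (if j = i - 1 then i else if j = i then i - 1 else j)"

lemma swp_swp: "1 \<le> i \<Longrightarrow> swp i (swp i j) = j"
  unfolding swp_def by auto

lemma nodd_mv: assumes "1 \<le> i" "i \<le> r" "e = 1 \<or> e = -1" shows "nodd r (mv i e x) = nodd r x"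
proof -
  have par: "odd (mv i e x j) \<longleftrightarrow> odd (x (swp i j))" for j
  proof -
    consider "j = i - 1" | "j = i" | "j \<noteq> i - 1 \<and> j \<noteq> i" by blast
    then show ?thesis
    proof cases
      case 1
      then have "mv i e x j = x (i-1) + e * (x (i - 1) - x i)" unfolding mv_def by simp
      moreover have "swp i j = i" using 1 unfolding swp_def by simp
      ultimately show ?thesis using assms(3) by auto
    next
      case 2
      then have "mv i e x j = x i + e * (x (i - 1) - x i)" unfolding mv_def by simp
      moreover have "swp i j = i - 1" using 2 assms unfolding swp_def by auto
      ultimately show ?thesis using assms(3) by auto
    qed (auto simp: mv_def swp_def)
  qed
  have "{j. j \<le> r \<and> odd (mv i e x j)} = swp i ` {j. j \<le> r \<and> odd (x j)}"
  proof (intro set_eqI iffI)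
    fix j assume "j \<in> {j. j \<le> r \<and> odd (mv i e x j)}"
    then have "swp i j \<le> r" "odd (x (swp i j))" using par assms unfolding swp_def by auto
    then show "j \<in> swp i ` {j. j \<le> r \<and> odd (x j)}"
      by (intro image_eqI[of _ _ "swp i j"]) (auto simp: swp_swp[OF assms(1)])
  next
    fix j assume "j \<in> swp i ` {j. j \<le> r \<and> odd (x j)}"
    then obtain l where l: "j = swp i l" "l \<le> r" "odd (x l)" by auto
    then have "j \<le> r" using assms unfolding swp_def by auto
    moreover have "odd (mv i e x j)" using par[of j] l(1,3) swp_swp[OF assms(1), of l] by simp
    ultimately show "j \<in> {j. j \<le> r \<and> odd (mv i e x j)}" by simp
  qed
  moreover have "inj (swp i)" using swp_swp[OF assms(1)] by (metis injI)
  ultimately show ?thesis unfolding nodd_def by (simp add: card_image inj_on_subset)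
qed

lemma cd_mv: assumes "1 \<le> i" "i \<le> r" "\<forall>j\<le>r. d dvd x j - x 0"
  shows "\<forall>j\<le>r. d dvd mv i m x j - mv i m x 0"
proof -
  have "d dvd x (i-1) - x 0" "d dvd x i - x 0" using assms by auto
  from dvd_diff[OF this] have "d dvd (x (i - 1) - x 0) - (x i - x 0)" .
  then have D: "d dvd x (i - 1) - x i" by simp
  have A: "d dvd mv i m x j - x 0" if "j \<le> r" for j
  proof -
    have "d dvd x j - x 0" using assms(3) that by auto
    moreover have "d dvd m * (x (i - 1) - x i)" using D by simp
    ultimately have "d dvd (x j - x 0) + m * (x (i - 1) - x i)" by (rule dvd_add)
    then show ?thesis using \<open>d dvd x j - x 0\<close> unfolding mv_def by (auto simp: algebra_simps)
  qed
  have B: "d dvd mv i m x 0 - x 0" using D unfolding mv_def by auto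
  show ?thesis
  proof (intro allI impI)
    fix j assume "j \<le> r"
    then have "d dvd (mv i m x j - x 0) - (mv i m x 0 - x 0)" using dvd_diff[OF A B] by auto
    then show "d dvd mv i m x j - mv i m x 0" by simp
  qed
qed

lemma rch_inv: assumes "rch n x y"
  shows "alt n y = alt n x \<and> nodd n y = nodd n x \<and> (\<forall>d. (\<forall>j\<le>n. d dvd x j - x 0) \<longrightarrow> (\<forall>j\<le>n. d dvd y j - y 0))"
  using assms
proof (induction rule: rch.induct)
  case (rch_refl x) then show ?case by simp
next
  case (rch_step x y i e)
  have "alt n (mv i e y) = alt n y" using alt_mv rch_step by blast
  moreover have "nodd n (mv i e y) = nodd n y" using nodd_mv rch_step by blast
  moreover have "(\<forall>j\<le>n. d dvd y j - y 0) \<longrightarrow> (\<forall>j\<le>n. d dvd mv i e y j - mv i e y 0)" for d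
    using cd_mv[of i n d y e] rch_step by blast
  ultimately show ?case using rch_step by simp
qed

lemma rch_cd: assumes "rch n x y" shows "(\<forall>j\<le>n. d dvd y j - y 0) \<longleftrightarrow> (\<forall>j\<le>n. d dvd x j - x 0)"
proof -
  have "rch n y x" using assms rch_sym by blast
  then show ?thesis using rch_inv[OF assms] rch_inv[of n y x] by blast
qed

lemma rch_prim: assumes "rch n x y" shows "prim n y \<longleftrightarrow> prim n x"
  unfolding prim_def using rch_cd[OF assms] by simp

definition D1 :: "nat \<Rightarrow> (nat \<Rightarrow> int) \<Rightarrow> int" where "D1 j x = x j - x (j - 1)"
definition D2 :: "nat \<Rightarrow> (nat \<Rightarrow> int) \<Rightarrow> int" where "D2 j x = x (j + 1) - x j"
definition AL :: "nat \<Rightarrow> (nat \<Rightarrow> int) \<Rightarrow> int" where "AL j x = x (j - 1) - x j + x (j + 1)"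

definition NF :: "nat \<Rightarrow> (nat \<Rightarrow> int) \<Rightarrow> (nat \<Rightarrow> int)" where
  "NF j x = (\<lambda>l. if l = j - 1 then AL j x else if l = j \<or> l = j + 1 then AL j x + gcd (D1 j x) (D2 j x) else x l)"

lemma gcd_lemA: "gcd (a::int) (b + m * a) = gcd a b"
  using gcd_add_mult[of a m b] by (simp add: add.commute)

lemma gcd_lemB: "gcd ((a::int) - m * b) b = gcd a b"
proof -
  have "gcd (a - m * b) b = gcd b ((-m) * b + a)" by (simp add: gcd.commute)
  also have "\<dots> = gcd b a" by (rule gcd_add_mult)
  finally show ?thesis by (simp add: gcd.commute)
qed

lemma NF_eq:
  assumes "1 \<le> j" "AL j y = AL j x" "gcd (D1 j y) (D2 j y) = gcd (D1 j x) (D2 j x)"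
    "\<And>l. l \<noteq> j - 1 \<Longrightarrow> l \<noteq> j \<Longrightarrow> l \<noteq> j + 1 \<Longrightarrow> y l = x l"
  shows "NF j y = NF j x"
  unfolding NF_def using assms by (intro ext) auto

lemma mv_j: assumes "1 \<le> j"
  shows "D1 j (mv j m x) = D1 j x" "D2 j (mv j m x) = D2 j x + m * D1 j x"
    "AL j (mv j m x) = AL j x" "\<And>l. l \<noteq> j - 1 \<Longrightarrow> l \<noteq> j \<Longrightarrow> mv j m x l = x l"
  using assms unfolding D1_def D2_def AL_def mv_def by (auto simp: algebra_simps)

lemma mv_j1: assumes "1 \<le> j"
  shows "D1 j (mv (Suc j) m x) = D1 j x - m * D2 j x" "D2 j (mv (Suc j) m x) = D2 j x"
    "AL j (mv (Suc j) m x) = AL j x" "\<And>l. l \<noteq> j \<Longrightarrow> l \<noteq> j + 1 \<Longrightarrow> mv (Suc j) m x l = x l"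
  using assms unfolding D1_def D2_def AL_def mv_def by (auto simp: algebra_simps)

lemma NF_mv_j: "1 \<le> j \<Longrightarrow> NF j (mv j m x) = NF j x"
  by (rule NF_eq) (auto simp: mv_j gcd_lemA)

lemma NF_mv_j1: "1 \<le> j \<Longrightarrow> NF j (mv (Suc j) m x) = NF j x"
  by (rule NF_eq) (auto simp: mv_j1 gcd_lemB)

definition rot :: "nat \<Rightarrow> (nat \<Rightarrow> int) \<Rightarrow> (nat \<Rightarrow> int)" where
  "rot j x = mv (Suc j) 1 (mv j 1 (mv (Suc j) 1 x))"

lemma rot_props: assumes "1 \<le> j"
  shows "D1 j (rot j x) = - D2 j x" "D2 j (rot j x) = D1 j x" "NF j (rot j x) = NF j x"
  using assms unfolding rot_def by (simp_all add: mv_j mv_j1 NF_mv_j NF_mv_j1)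

lemma rch_rot: "rch n x y \<Longrightarrow> 1 \<le> j \<Longrightarrow> j + 1 \<le> n \<Longrightarrow> rch n x (rot j y)"
  unfolding rot_def by (intro rch_mv) auto

lemma NF_self: assumes "1 \<le> j" "D2 j x = 0" "D1 j x \<ge> 0" shows "NF j x = x"
proof (rule ext)
  fix l
  have g: "gcd (D1 j x) (D2 j x) = D1 j x" using assms by simp
  show "NF j x l = x l" unfolding NF_def g using assms unfolding D1_def D2_def AL_def by auto
qed

lemma rch_NF_aux: "nat \<bar>D2 j x\<bar> = k \<Longrightarrow> 1 \<le> j \<Longrightarrow> j + 1 \<le> n \<Longrightarrow> rch n x (NF j x)"
proof (induction k arbitrary: x rule: less_induct)
  case (less k x)
  show ?case
  proof (cases "D2 j x = 0")
    case True
    show ?thesis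
    proof (cases "D1 j x \<ge> 0")
      case True
      then show ?thesis using NF_self \<open>D2 j x = 0\<close> less.prems rch.rch_refl by metis
    next
      case False
      define y where "y = rot j (rot j x)"
      have "D2 j y = 0" "D1 j y = - D1 j x" "NF j y = NF j x"
        unfolding y_def using less.prems \<open>D2 j x = 0\<close> by (simp_all add: rot_props)
      then have "NF j y = y" using NF_self less.prems False by (metis neg_0_le_iff_le linorder_le_cases)
      moreover have "rch n x y" unfolding y_def using less.prems by (intro rch_rot rch.rch_refl) auto
      ultimately show ?thesis using \<open>NF j y = NF j x\<close> by simp
    qed
  next
    case False
    define y where "y = rot j (mv (Suc j) (D1 j x div D2 j x) x)"
    have "D2 j y = D1 j x mod D2 j x"
      unfolding y_def using less.prems by (simp add: rot_props mv_j1 minus_div_mult_eq_mod[symmetric] mult.commute)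
    moreover have "\<bar>D1 j x mod D2 j x\<bar> < \<bar>D2 j x\<bar>" using abs_mod_less[OF False] by blast
    ultimately have "nat \<bar>D2 j y\<bar> < k" using less.prems(1) by linarith
    then have "rch n y (NF j y)" using less.IH less.prems by blast
    moreover have "NF j y = NF j x" unfolding y_def using less.prems by (simp add: rot_props NF_mv_j1)
    moreover have "rch n x y" unfolding y_def using less.prems by (intro rch_rot rch_mv rch.rch_refl) auto
    ultimately show ?thesis using rch_trans by metis
  qed
qed

lemma rch_window:
  assumes "1 \<le> j" "j + 1 \<le> n" "AL j y = AL j x" "gcd (D1 j y) (D2 j y) = gcd (D1 j x) (D2 j x)"
    "\<And>l. l \<noteq> j - 1 \<Longrightarrow> l \<noteq> j \<Longrightarrow> l \<noteq> j + 1 \<Longrightarrow> y l = x l"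
  shows "rch n x y"
proof -
  have "rch n x (NF j x)" "rch n y (NF j y)" using rch_NF_aux assms(1,2) by blast+
  moreover have "NF j y = NF j x" using NF_eq assms by blast
  ultimately show ?thesis using rch_sym rch_trans by metis
qed

definition F :: "int \<Rightarrow> nat \<Rightarrow> nat \<Rightarrow> int" where
  "F c k i = (if i < k then c + 1 else c)"

lemma sum_sign_lessThan: "(\<Sum>i<k. (-1::int)^i) = (if odd k then 1 else 0)"
  by (induction k) auto

lemma sum_sign_atMost: "(\<Sum>i\<le>r. (-1::int)^i) = (if even r then 1 else 0)"
  by (induction r) auto

lemma alt_F: assumes "even r" "k \<le> Suc r" shows "alt r (F c k) = c + (if odd k then 1 else 0)"
proof -
  have "alt r (F c k) = (\<Sum>i\<le>r. (-1)^i * c + (-1)^i * (if i < k then 1 else 0))"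
    unfolding alt_def F_def by (intro sum.cong) (auto simp: algebra_simps)
  also have "\<dots> = (\<Sum>i\<le>r. (-1)^i * c) + (\<Sum>i\<le>r. (-1)^i * (if i < k then 1 else 0))"
    by (rule sum.distrib)
  also have "(\<Sum>i\<le>r. (-1::int)^i * c) = c"
    using sum_sign_atMost[of r] assms(1) by (simp add: sum_distrib_right[symmetric])
  also have "(\<Sum>i\<le>r. (-1::int)^i * (if i < k then 1 else 0)) = (\<Sum>i\<in>{i\<in>{..r}. i < k}. (-1)^i)"
    by (subst sum.inter_filter) (auto intro: sum.cong)
  also have "{i\<in>{..r}. i < k} = {..<k}" using assms(2) by auto
  finally show ?thesis using sum_sign_lessThan[of k] by simp
qed

lemma nodd_F: assumes "k \<le> Suc r" shows "nodd r (F c k) = (if even c then k else Suc r - k)"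
proof (cases "even c")
  case True
  then have "{i. i \<le> r \<and> odd (F c k i)} = {..<k}" using assms unfolding F_def by auto
  then show ?thesis using True unfolding nodd_def by simp
next
  case False
  then have "{i. i \<le> r \<and> odd (F c k i)} = {k..r}" using assms unfolding F_def by auto
  then show ?thesis using False unfolding nodd_def by simp
qed

lemma F_unit: "1 \<le> k \<Longrightarrow> F c k (k - 1) - F c k k = 1"
  unfolding F_def by auto

lemma EX1: assumes "even r" "1 \<le> \<beta>" "\<beta> \<le> r" "even (A - int \<beta>)"
  shows "\<exists>c k. 1 \<le> k \<and> k + 1 \<le> r \<and> alt r (F c k) = A \<and> nodd r (F c k) = \<beta>"
proof (cases "\<beta> + 1 \<le> r")
  case True
  define c where "c = A - (if odd \<beta> then 1 else 0)"
  have ce: "even c" using assms(4) unfolding c_def by (cases "odd \<beta>") auto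
  show ?thesis
    by (rule exI[of _ c], rule exI[of _ \<beta>]) (use True assms ce in \<open>auto simp: alt_F nodd_F c_def\<close>)
next
  case False
  then have b: "\<beta> = r" using assms by simp
  define c where "c = A - 1"
  have ce: "odd c" using assms(1,4) b unfolding c_def by auto
  have r2: "2 \<le> r" using assms(1,2) b by presburger
  show ?thesis
    by (rule exI[of _ c], rule exI[of _ 1]) (use b r2 assms ce in \<open>auto simp: alt_F nodd_F c_def\<close>)
qed

lemma EX0: assumes "even r" "\<beta> \<le> Suc r" "even (A - int \<beta>)"
  shows "\<exists>c k. k \<le> Suc r \<and> alt r (F c k) = A \<and> nodd r (F c k) = \<beta>"
proof -
  define c where "c = A - (if odd \<beta> then 1 else 0)"
  have ce: "even c" using assms(3) unfolding c_def by (cases "odd \<beta>") auto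
  show ?thesis
    by (rule exI[of _ c], rule exI[of _ \<beta>]) (use assms ce in \<open>auto simp: alt_F nodd_F c_def\<close>)
qed

lemma scale_mv: assumes "1 \<le> i" "i \<le> r"
  shows "mv i e (\<lambda>l. if l \<le> r then c + g * b l else z l) = (\<lambda>l. if l \<le> r then c + g * mv i e b l else z l)"
  using assms unfolding mv_def by (intro ext) (auto simp: algebra_simps)

lemma rch_scale: "rch r a b \<Longrightarrow> rch r (\<lambda>l. if l \<le> r then c + g * a l else z l) (\<lambda>l. if l \<le> r then c + g * b l else z l)"
proof (induction rule: rch.induct)
  case (rch_refl x) then show ?case by (rule rch.rch_refl)
next
  case (rch_step x y i e)
  then show ?case using rch.rch_step[OF rch_step.IH, of i e] scale_mv[of i r e c g y z] by simp
qed

lemma rch_SW: assumes "p + 3 \<le> n" "x p = a" "x (p+1) = a" "x (p+2) = b" "x (p+3) = b"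
  shows "rch n x (x(p := b, p+1 := b, p+2 := a, p+3 := a))"
proof -
  have "mv (p+2) 1 (mv (p+3) 1 (mv (p+1) 1 (mv (p+2) 1 x))) = x(p := b, p+1 := b, p+2 := a, p+3 := a)"
    using assms unfolding mv_def by (intro ext) auto
  moreover have "rch n x (mv (p+2) 1 (mv (p+3) 1 (mv (p+1) 1 (mv (p+2) 1 x))))"
    using assms(1) by (intro rch_mv rch.rch_refl) auto
  ultimately show ?thesis by simp
qed

lemma prim2_gcd: assumes "prim 2 x" shows "gcd (D1 1 x) (D2 1 x) = 1"
proof -
  define g where "g = gcd (D1 1 x) (D2 1 x)"
  have a: "g dvd x 1 - x 0" "g dvd x 2 - x 1" unfolding g_def D1_def D2_def by (simp_all add: numeral_2_eq_2)
  have "g dvd (x 1 - x 0) + (x 2 - x 1)" using a by (rule dvd_add)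
  then have "g dvd x 2 - x 0" by simp
  moreover have "i \<le> 2 \<Longrightarrow> i = 0 \<or> i = 1 \<or> i = 2" for i :: nat by auto
  ultimately have "\<forall>i\<le>2. g dvd x i - x 0" using a(1) by fastforce
  then have "g dvd 1" using assms unfolding prim_def by blast
  moreover have "g \<ge> 0" unfolding g_def by simp
  ultimately show ?thesis unfolding g_def by (simp add: zdvd1_eq)
qed

lemma alt_SS: "even r \<Longrightarrow> alt (Suc (Suc r)) x = alt r x - x (Suc r) + x (Suc (Suc r))"
  using alt_Suc[of "Suc r" x] alt_Suc[of r x] by simp

lemma nodd_SS: "nodd (Suc (Suc r)) x = nodd r x + (if odd (x (Suc r)) then 1 else 0) + (if odd (x (Suc (Suc r))) then 1 else 0)"
  using nodd_Suc[of "Suc r" x] nodd_Suc[of r x] by simp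

lemma even_m: assumes "even m" "2 \<le> m" obtains r where "m = Suc (Suc r)" "even r"
proof -
  have "m = Suc (Suc (m - 2))" using assms by simp
  moreover have "even (m - 2)" using assms by simp
  ultimately show ?thesis using that by blast
qed

context
  fixes m :: nat
  assumes IH: "\<And>x y. prim m x \<Longrightarrow> prim m y \<Longrightarrow> alt m x = alt m y \<Longrightarrow> nodd m x = nodd m y \<Longrightarrow> (\<forall>j>m. x j = y j) \<Longrightarrow> rch m x y"
    and ev: "even m" and m2: "2 \<le> m"
begin

lemma IHn: "prim m x \<Longrightarrow> prim m y \<Longrightarrow> alt m x = alt m y \<Longrightarrow> nodd m x = nodd m y \<Longrightarrow> (\<forall>j>m. x j = y j) \<Longrightarrow> rch (Suc (Suc m)) x y"
proof -
  assume "prim m x" "prim m y" "alt m x = alt m y" "nodd m x = nodd m y" "\<forall>j>m. x j = y j"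
  then have "rch m x y" by (rule IH)
  then show "rch (Suc (Suc m)) x y" by (rule rch_mono) simp
qed

lemma SH: assumes "prim m a" "a (Suc m) = t" "a (Suc (Suc m)) = t"
  shows "rch (Suc (Suc m)) a (a(Suc m := t + 2, Suc (Suc m) := t + 2))"
proof -
  obtain r where r: "m = Suc (Suc r)" "even r" using ev m2 even_m by blast
  define \<beta> where "\<beta> = nodd m a"
  have \<beta>: "1 \<le> \<beta>" "\<beta> \<le> m" using prim_nodd assms(1) \<beta>_def by auto
  have par: "even (alt m a - int \<beta>)" using alt_nodd_parity \<beta>_def by simp
  have par2: "even ((alt m a - 1) - int (\<beta> - 1))" using par \<beta>(1) by (simp add: of_nat_diff)
  obtain c k where ck: "k \<le> Suc r" "alt r (F c k) = alt m a - 1" "nodd r (F c k) = \<beta> - 1"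
  proof -
    have "\<beta> - 1 \<le> Suc r" using \<beta> r by simp
    from EX0[OF r(2) this par2] show ?thesis using that by blast
  qed
  define b where "b = (\<lambda>i. if i \<le> r then F c k i else if i = Suc r then t else if i = Suc (Suc r) then t + 1 else a i)"
  have b1: "b (Suc r) = t" "b (Suc (Suc r)) = t + 1" unfolding b_def by auto
  have "alt r b = alt r (F c k)" by (rule alt_cong) (simp add: b_def)
  moreover have "alt m b = alt r b - b (Suc r) + b (Suc (Suc r))" unfolding r(1) by (rule alt_SS[OF r(2)])
  ultimately have altb: "alt m b = alt m a" unfolding b1 using ck by simp
  have "nodd r b = nodd r (F c k)" by (rule nodd_cong) (simp add: b_def)
  moreover have "nodd m b = nodd r b + (if odd (b (Suc r)) then 1 else 0) + (if odd (b (Suc (Suc r))) then 1 else 0)"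
    unfolding r(1) by (rule nodd_SS)
  ultimately have noddb: "nodd m b = nodd m a" unfolding b1 using ck \<beta> \<beta>_def by auto
  have primb: "prim m b"
    by (rule prim_unit[of m]) (use r b1 in auto)
  have outb: "\<forall>j>m. a j = b j" unfolding b_def r by auto
  have 1: "rch (Suc (Suc m)) a b" using IHn[OF assms(1) primb altb[symmetric] noddb[symmetric] outb] .
  define b2 where "b2 = b(Suc m := t + 2, Suc (Suc m) := t + 2)"
  have bm: "b m = t + 1" "b (Suc m) = t" "b (Suc (Suc m)) = t" using b1 r assms unfolding b_def by auto
  have 2: "rch (Suc (Suc m)) b b2"
    by (rule rch_window[of "Suc m"]) (use bm in \<open>auto simp: b2_def AL_def D1_def D2_def\<close>)
  define T where "T = a(Suc m := t + 2, Suc (Suc m) := t + 2)"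
  have 3: "rch (Suc (Suc m)) b2 T"
  proof (rule IHn)
    have e1: "\<And>i. i \<le> m \<Longrightarrow> b2 i = b i" unfolding b2_def by auto
    have e2: "\<And>i. i \<le> m \<Longrightarrow> T i = a i" unfolding T_def by auto
    show "prim m b2" using primb prim_cong[OF e1] by simp
    show "prim m T" using assms(1) prim_cong[OF e2] by simp
    show "alt m b2 = alt m T" using altb alt_cong[OF e1] alt_cong[OF e2] by simp
    show "nodd m b2 = nodd m T" using noddb nodd_cong[OF e1] nodd_cong[OF e2] by simp
    show "\<forall>j>m. b2 j = T j" using outb unfolding b2_def T_def by auto
  qed
  show ?thesis unfolding T_def[symmetric] by (rule rch_trans[OF 3 rch_trans[OF 2 1]])
qed

lemma SHk: assumes "prim m a" "a (Suc m) = t" "a (Suc (Suc m)) = t"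
  shows "rch (Suc (Suc m)) a (a(Suc m := t + 2 * int k, Suc (Suc m) := t + 2 * int k))"
proof (induction k)
  case 0
  have eq: "a(Suc m := t + 2 * int 0, Suc (Suc m) := t + 2 * int 0) = a" using assms by (intro ext) auto
  show ?case by (subst eq) (rule rch.rch_refl)
next
  case (Suc k)
  define ak where "ak = a(Suc m := t + 2 * int k, Suc (Suc m) := t + 2 * int k)"
  have e1: "\<And>i. i \<le> m \<Longrightarrow> ak i = a i" unfolding ak_def by auto
  have "prim m ak" using assms(1) prim_cong[OF e1] by simp
  then have "rch (Suc (Suc m)) ak (ak(Suc m := t + 2 * int k + 2, Suc (Suc m) := t + 2 * int k + 2))"
    by (rule SH) (auto simp: ak_def)
  moreover have "ak(Suc m := t + 2 * int k + 2, Suc (Suc m) := t + 2 * int k + 2) =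
      a(Suc m := t + 2 * int (Suc k), Suc (Suc m) := t + 2 * int (Suc k))"
    unfolding ak_def by (intro ext) auto
  ultimately have X: "rch (Suc (Suc m)) ak (a(Suc m := t + 2 * int (Suc k), Suc (Suc m) := t + 2 * int (Suc k)))"
    by simp
  show ?case by (rule rch_trans[OF X Suc.IH[folded ak_def]])
qed

lemma SHany: assumes "prim m a" "a (Suc m) = t" "a (Suc (Suc m)) = t" "even (t' - t)"
  shows "rch (Suc (Suc m)) a (a(Suc m := t', Suc (Suc m) := t'))"
proof (cases "t \<le> t'")
  case True
  obtain q where q: "t' - t = 2 * q" using assms(4) by blast
  have "q \<ge> 0" using q True by simp
  then have "t' = t + 2 * int (nat q)" using q by simp
  then show ?thesis using SHk[OF assms(1-3), of "nat q"] by simp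
next
  case False
  have "even (t - t')" using assms(4) by (simp add: dvd_diff_commute)
  then obtain q where q: "t - t' = 2 * q" by blast
  have "q \<ge> 0" using q False by simp
  then have tq: "t = t' + 2 * int (nat q)" using q by simp
  define a' where "a' = a(Suc m := t', Suc (Suc m) := t')"
  have e1: "\<And>i. i \<le> m \<Longrightarrow> a' i = a i" unfolding a'_def by auto
  have "prim m a'" using assms(1) prim_cong[OF e1] by simp
  then have "rch (Suc (Suc m)) a' (a'(Suc m := t' + 2 * int (nat q), Suc (Suc m) := t' + 2 * int (nat q)))"
    by (rule SHk) (auto simp: a'_def)
  moreover have "a'(Suc m := t' + 2 * int (nat q), Suc (Suc m) := t' + 2 * int (nat q)) = a"
    unfolding a'_def using tq assms(2,3) by (intro ext) auto
  ultimately have "rch (Suc (Suc m)) a' a" by simp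
  then show ?thesis unfolding a'_def by (rule rch_sym)
qed

lemma COMP: assumes "prim m a" "prim m b" "a (Suc m) = a (Suc (Suc m))" "b (Suc m) = b (Suc (Suc m))"
  "even (a (Suc m) - b (Suc m))" "alt m a = alt m b" "nodd m a = nodd m b" "\<forall>j>Suc (Suc m). a j = b j"
  shows "rch (Suc (Suc m)) a b"
proof -
  define a' where "a' = a(Suc m := b (Suc m), Suc (Suc m) := b (Suc m))"
  have 1: "rch (Suc (Suc m)) a a'" unfolding a'_def
    by (rule SHany[OF assms(1) refl assms(3)[symmetric]]) (use assms(5) in \<open>simp add: dvd_diff_commute\<close>)
  have e1: "\<And>i. i \<le> m \<Longrightarrow> a' i = a i" unfolding a'_def by auto
  have 2: "rch (Suc (Suc m)) a' b"
  proof (rule IHn)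
    show "prim m a'" using assms(1) prim_cong[OF e1] by simp
    show "prim m b" by (rule assms(2))
    show "alt m a' = alt m b" using assms(6) alt_cong[OF e1] by simp
    show "nodd m a' = nodd m b" using assms(7) nodd_cong[OF e1] by simp
    show "\<forall>j>m. a' j = b j"
    proof (intro allI impI)
      fix j assume "m < j"
      then consider "j = Suc m" | "j = Suc (Suc m)" | "j > Suc (Suc m)" by linarith
      then show "a' j = b j" using assms(4,8) unfolding a'_def by cases auto
    qed
  qed
  show ?thesis by (rule rch_trans[OF 2 1])
qed

lemma PT: assumes "prim m a" "a (Suc m) = t" "a (Suc (Suc m)) = t" "odd t" "nodd m a + 2 \<le> m"
  shows "\<exists>b. rch (Suc (Suc m)) a b \<and> prim m b \<and> b (Suc m) = 0 \<and> b (Suc (Suc m)) = 0 \<and>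
     alt m b = alt m a \<and> nodd m b = nodd m a + 2 \<and> (\<forall>j>Suc (Suc m). b j = a j)"
proof -
  obtain r where r: "m = Suc (Suc r)" "even r" using ev m2 even_m by blast
  define \<beta> where "\<beta> = nodd m a"
  have \<beta>: "1 \<le> \<beta>" "\<beta> \<le> r" using prim_nodd assms(1,5) \<beta>_def r by auto
  have par: "even (alt m a - int \<beta>)" using alt_nodd_parity \<beta>_def by simp
  obtain c k where ck: "1 \<le> k" "k + 1 \<le> r" "alt r (F c k) = alt m a" "nodd r (F c k) = \<beta>"
    using EX1[OF r(2) \<beta> par] by blast
  define b where "b = (\<lambda>i. if i \<le> r then F c k i else if i = Suc r \<or> i = Suc (Suc r) then 0 else a i)"
  have b1: "b (Suc r) = 0" "b (Suc (Suc r)) = 0" unfolding b_def by auto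
  have "alt r b = alt r (F c k)" by (rule alt_cong) (simp add: b_def)
  moreover have "alt m b = alt r b - b (Suc r) + b (Suc (Suc r))" unfolding r(1) by (rule alt_SS[OF r(2)])
  ultimately have altb: "alt m b = alt m a" unfolding b1 using ck by simp
  have "nodd r b = nodd r (F c k)" by (rule nodd_cong) (simp add: b_def)
  moreover have "nodd m b = nodd r b + (if odd (b (Suc r)) then 1 else 0) + (if odd (b (Suc (Suc r))) then 1 else 0)"
    unfolding r(1) by (rule nodd_SS)
  ultimately have noddb: "nodd m b = nodd m a" unfolding b1 using ck \<beta>_def by auto
  have bk: "b (k - 1) - b k = 1" using ck F_unit[of k c] unfolding b_def by auto
  have primb: "prim m b" by (rule prim_unit[of k]) (use ck r bk in auto)
  have outb: "\<forall>j>m. a j = b j" unfolding b_def r by auto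
  have 1: "rch (Suc (Suc m)) a b" using IHn[OF assms(1) primb altb[symmetric] noddb[symmetric] outb] .
  define b2 where "b2 = b(Suc r := t, Suc r + 1 := t, Suc r + 2 := 0, Suc r + 3 := 0)"
  have e2: "Suc r + 2 = Suc m" and e3: "Suc r + 3 = Suc (Suc m)" using r(1) by simp_all
  have bv: "b (Suc r + 2) = t" "b (Suc r + 3) = t" unfolding e2 e3 using assms(2,3) r(1) unfolding b_def by auto
  have 2: "rch (Suc (Suc m)) b b2" unfolding b2_def
    by (rule rch_SW) (use r(1) b1 bv in simp_all)
  have e1: "\<And>i. i \<le> r \<Longrightarrow> b2 i = b i" unfolding b2_def by auto
  have b2v: "b2 (Suc r) = t" "b2 (Suc (Suc r)) = t" "b2 (Suc m) = 0" "b2 (Suc (Suc m)) = 0"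
    unfolding b2_def r by auto
  have P1: "prim m b2"
  proof (rule prim_unit[of k])
    show "1 \<le> k" "k \<le> m" using ck r by auto
    show "b2 (k - 1) - b2 k = 1 \<or> b2 k - b2 (k - 1) = 1" using bk e1 ck by simp
  qed
  have P2: "alt m b2 = alt m a"
  proof -
    have "alt m b2 = alt r b2 - b2 (Suc r) + b2 (Suc (Suc r))" unfolding r(1) by (rule alt_SS[OF r(2)])
    also have "alt r b2 = alt r b" by (rule alt_cong[OF e1])
    finally show ?thesis using altb b1 \<open>alt r b = alt r (F c k)\<close> ck b2v
      \<open>alt m b = alt r b - b (Suc r) + b (Suc (Suc r))\<close> by simp
  qed
  have P3: "nodd m b2 = nodd m a + 2"
  proof -
    have "nodd m b2 = nodd r b2 + (if odd (b2 (Suc r)) then 1 else 0) + (if odd (b2 (Suc (Suc r))) then 1 else 0)"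
      unfolding r(1) by (rule nodd_SS)
    also have "nodd r b2 = nodd r b" by (rule nodd_cong[OF e1])
    finally show ?thesis using b2v assms(4) ck \<beta>_def \<open>nodd r b = nodd r (F c k)\<close> by simp
  qed
  have P4: "\<forall>j>Suc (Suc m). b2 j = a j" using outb unfolding b2_def r by auto
  show ?thesis
    apply (rule exI[of _ b2])
    using rch_trans[OF 2 1] P1 P2 P3 P4 b2v(3,4) by (intro conjI) assumption+
qed


lemma SF1: assumes "prim (Suc (Suc m)) x"
  shows "\<exists>x1 g. rch (Suc (Suc m)) x x1 \<and> (\<forall>j>m. x1 j = x j) \<and> (\<forall>i\<le>m. g dvd x1 i - x1 0) \<and>
      (\<forall>d. (\<forall>i<m. d dvd x1 i - x1 0) \<longrightarrow> d dvd g)"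
proof (cases "\<forall>i\<le>m. x i = x 0")
  case True
  have "\<forall>i\<le>m. (0::int) dvd x i - x 0"
  proof (intro allI impI)
    fix i assume "i \<le> m"
    then have "x i = x 0" using True by blast
    then show "(0::int) dvd x i - x 0" by simp
  qed
  moreover have "\<forall>d. (\<forall>i<m. d dvd x i - x 0) \<longrightarrow> d dvd (0::int)" by simp
  ultimately show ?thesis using rch.rch_refl by blast
next
  case False
  define g where "g = Gcd ((\<lambda>i. x i - x 0) ` {..m})"
  have gd: "\<forall>i\<le>m. g dvd x i - x 0" unfolding g_def by (auto intro: Gcd_dvd)
  have gne: "g \<noteq> 0" using False unfolding g_def by auto
  define yv where "yv = (\<lambda>i. if i \<le> m then (x i - x 0) div g else 0)"
  have xeq: "\<forall>i\<le>m. x i - x 0 = g * yv i" using gd unfolding yv_def by simp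
  have y0: "yv 0 = 0" unfolding yv_def by simp
  have primy: "prim m yv" unfolding prim_def
  proof (intro allI impI)
    fix d assume H: "\<forall>i\<le>m. d dvd yv i - yv 0"
    have "d * g dvd x i - x 0" if "i \<le> m" for i
    proof -
      have "d dvd yv i" using H that y0 by auto
      then have "d * g dvd yv i * g" by simp
      moreover have "x i - x 0 = yv i * g" using xeq that by (simp only: mult.commute)
      ultimately show ?thesis by simp
    qed
    then have D: "\<And>b. b \<in> (\<lambda>i. x i - x 0) ` {..m} \<Longrightarrow> d * g dvd b" by auto
    have "d * g dvd Gcd ((\<lambda>i. x i - x 0) ` {..m})" by (rule Gcd_greatest) (rule D)
    then have "d * g dvd g" by (simp only: g_def[symmetric])
    then have "d * g dvd 1 * g" by simp
    then show "d dvd 1" using gne by (simp only: dvd_mult_cancel_right) simp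
  qed
  have par: "even (alt m yv - int (nodd m yv))" by (rule alt_nodd_parity)
  obtain c k where ck: "1 \<le> k" "k + 1 \<le> m" "alt m (F c k) = alt m yv" "nodd m (F c k) = nodd m yv"
    using EX1[OF ev prim_nodd[OF primy] par] by blast
  define zv where "zv = (\<lambda>i. if i \<le> m then F c k i else 0)"
  have ez: "\<And>i. i \<le> m \<Longrightarrow> zv i = F c k i" unfolding zv_def by simp
  have "rch m yv zv"
  proof (rule IH[OF primy])
    show "prim m zv" by (rule prim_unit[of k]) (use ck F_unit[of k c] in \<open>auto simp: zv_def\<close>)
    show "alt m yv = alt m zv" using ck alt_cong[OF ez] by simp
    show "nodd m yv = nodd m zv" using ck nodd_cong[OF ez] by simp
    show "\<forall>j>m. yv j = zv j" unfolding yv_def zv_def by auto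
  qed
  then have R: "rch m (\<lambda>l. if l \<le> m then x 0 + g * yv l else x l) (\<lambda>l. if l \<le> m then x 0 + g * zv l else x l)"
    by (rule rch_scale)
  have xx: "(\<lambda>l. if l \<le> m then x 0 + g * yv l else x l) = x"
  proof (rule ext)
    fix l
    show "(if l \<le> m then x 0 + g * yv l else x l) = x l"
    proof (cases "l \<le> m")
      case True
      then have "x l - x 0 = g * yv l" using xeq by blast
      then show ?thesis using True by simp
    qed simp
  qed
  define x1 where "x1 = (\<lambda>l. if l \<le> m then x 0 + g * zv l else x l)"
  have z0: "zv 0 = c + 1" using ck unfolding zv_def F_def by auto
  have x10: "x1 0 = x 0 + g * (c + 1)" unfolding x1_def using z0 by simp
  show ?thesis
  proof (rule exI[of _ x1], rule exI[of _ g], intro conjI)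
    have "rch m x x1" using R xx unfolding x1_def by simp
    then show "rch (Suc (Suc m)) x x1" by (rule rch_mono) simp
    show "\<forall>j>m. x1 j = x j" unfolding x1_def by simp
    show "\<forall>i\<le>m. g dvd x1 i - x1 0"
    proof (intro allI impI)
      fix i assume "i \<le> m"
      then have "x1 i - x1 0 = g * (zv i - (c + 1))" unfolding x10 unfolding x1_def by (simp add: algebra_simps)
      then show "g dvd x1 i - x1 0" by simp
    qed
    show "\<forall>d. (\<forall>i<m. d dvd x1 i - x1 0) \<longrightarrow> d dvd g"
    proof (intro allI impI)
      fix d assume H: "\<forall>i<m. d dvd x1 i - x1 0"
      have "d dvd x1 (k - 1) - x1 0" "d dvd x1 k - x1 0" using H ck by auto
      from dvd_diff[OF this] have "d dvd (x1 (k - 1) - x1 0) - (x1 k - x1 0)" .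
      moreover have "x1 (k - 1) - x1 k = g" using ck unfolding x1_def zv_def F_def by (auto simp: algebra_simps)
      ultimately show "d dvd g" by simp
    qed
  qed
qed

lemma SF: assumes "prim (Suc (Suc m)) x"
  shows "\<exists>y. rch (Suc (Suc m)) x y \<and> prim m y \<and> y (Suc m) = y (Suc (Suc m)) \<and> (\<forall>j>Suc (Suc m). y j = x j)"
proof -
  obtain x1 g where x1: "rch (Suc (Suc m)) x x1" "\<forall>j>m. x1 j = x j" "\<forall>i\<le>m. g dvd x1 i - x1 0"
    "\<forall>d. (\<forall>i<m. d dvd x1 i - x1 0) \<longrightarrow> d dvd g"
    using SF1[OF assms] by blast
  have p1: "prim (Suc (Suc m)) x1" using rch_prim[OF x1(1)] assms by simp
  define u where "u = x1 m"
  define v where "v = x1 (Suc m)"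
  define w where "w = x1 (Suc (Suc m))"
  define h where "h = gcd (v - u) (w - v)"
  define x2 where "x2 = x1(m := u + h, Suc m := u + 2 * h, Suc (Suc m) := u - v + w + h)"
  have hw: "h dvd w - v" unfolding h_def by simp
  have hu: "h dvd v - u" unfolding h_def by simp
  have h0: "h \<ge> 0" unfolding h_def by simp
  have r2: "rch (Suc (Suc m)) x1 x2"
  proof (rule rch_window[of "Suc m"])
    show "AL (Suc m) x2 = AL (Suc m) x1" unfolding AL_def x2_def u_def v_def w_def by simp
    have "gcd (D1 (Suc m) x2) (D2 (Suc m) x2) = gcd h ((w - v) + (-1) * h)"
      unfolding D1_def D2_def x2_def by (simp add: algebra_simps)
    also have "\<dots> = gcd h (w - v)" by (rule gcd_lemA)
    also have "\<dots> = h" using hw h0 by simp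
    also have "h = gcd (D1 (Suc m) x1) (D2 (Suc m) x1)" unfolding h_def D1_def D2_def u_def v_def w_def by simp
    finally show "gcd (D1 (Suc m) x2) (D2 (Suc m) x2) = gcd (D1 (Suc m) x1) (D2 (Suc m) x1)" .
  qed (auto simp: x2_def)
  have m0: "0 < m" using m2 by simp
  have x20: "x2 0 = x1 0" unfolding x2_def using m0 by simp
  have pm2: "prim m x2" unfolding prim_def
  proof (intro allI impI)
    fix d assume H: "\<forall>i\<le>m. d dvd x2 i - x2 0"
    have "\<forall>i<m. d dvd x1 i - x1 0"
    proof (intro allI impI)
      fix i assume "i < m"
      then have "x2 i = x1 i" unfolding x2_def by simp
      moreover have "d dvd x2 i - x2 0" using H \<open>i < m\<close> by simp
      ultimately show "d dvd x1 i - x1 0" using x20 by simp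
    qed
    then have dg: "d dvd g" using x1(4) by blast
    have "g dvd u - x1 0" using x1(3) unfolding u_def by simp
    then have du: "d dvd u - x1 0" using dg by (rule dvd_trans[rotated])
    have "d dvd x2 m - x2 0" using H by simp
    then have "d dvd (u + h) - x1 0" unfolding x2_def x20[unfolded x2_def] by simp
    then have "d dvd ((u + h) - x1 0) - (u - x1 0)" using du by (rule dvd_diff)
    then have dh: "d dvd h" by simp
    have "\<forall>j\<le>Suc (Suc m). d dvd x1 j - x1 0"
    proof (intro allI impI)
      fix j assume "j \<le> Suc (Suc m)"
      then consider "j \<le> m" | "j = Suc m" | "j = Suc (Suc m)" by linarith
      then show "d dvd x1 j - x1 0"
      proof cases
        case 1 then show ?thesis using x1(3) dg dvd_trans by blast
      next
        case 2
        have "d dvd (v - u) + (u - x1 0)" using dvd_trans[OF dh hu] du by (rule dvd_add)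
        then show ?thesis using 2 unfolding v_def by simp
      next
        case 3
        have "d dvd (v - u) + (u - x1 0)" using dvd_trans[OF dh hu] du by (rule dvd_add)
        from dvd_add[OF dvd_trans[OF dh hw] this] have "d dvd (w - v) + ((v - u) + (u - x1 0))" .
        then show ?thesis using 3 unfolding w_def by simp
      qed
    qed
    then show "d dvd 1" using p1 unfolding prim_def by blast
  qed
  have par: "even (alt m x2 - int (nodd m x2))" by (rule alt_nodd_parity)
  obtain c k where ck: "1 \<le> k" "k + 1 \<le> m" "alt m (F c k) = alt m x2" "nodd m (F c k) = nodd m x2"
    using EX1[OF ev prim_nodd[OF pm2] par] by blast
  define x3 where "x3 = (\<lambda>i. if i \<le> m then F c k i else x2 i)"
  have e3: "\<And>i. i \<le> m \<Longrightarrow> x3 i = F c k i" unfolding x3_def by simp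
  have pu3: "x3 (k - 1) - x3 k = 1" using ck F_unit[of k c] unfolding x3_def by auto
  have p3: "prim m x3" by (rule prim_unit[of k]) (use ck pu3 in auto)
  have r3: "rch m x2 x3"
  proof (rule IH[OF pm2 p3])
    show "alt m x2 = alt m x3" using ck alt_cong[OF e3] by simp
    show "nodd m x2 = nodd m x3" using ck nodd_cong[OF e3] by simp
    show "\<forall>j>m. x2 j = x3 j" unfolding x3_def by simp
  qed
  define u3 where "u3 = x3 m"
  define v3 where "v3 = x3 (Suc m)"
  define w3 where "w3 = x3 (Suc (Suc m))"
  define h3 where "h3 = gcd (v3 - u3) (w3 - v3)"
  define A3 where "A3 = u3 - v3 + w3"
  define x4 where "x4 = x3(m := A3, Suc m := A3 + h3, Suc (Suc m) := A3 + h3)"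
  have r4: "rch (Suc (Suc m)) x3 x4"
  proof (rule rch_window[of "Suc m"])
    show "AL (Suc m) x4 = AL (Suc m) x3" unfolding AL_def x4_def A3_def u3_def v3_def w3_def by simp
    have "gcd (D1 (Suc m) x4) (D2 (Suc m) x4) = h3" unfolding D1_def D2_def x4_def h3_def by simp
    also have "h3 = gcd (D1 (Suc m) x3) (D2 (Suc m) x3)" unfolding h3_def D1_def D2_def u3_def v3_def w3_def by simp
    finally show "gcd (D1 (Suc m) x4) (D2 (Suc m) x4) = gcd (D1 (Suc m) x3) (D2 (Suc m) x3)" .
  qed (auto simp: x4_def)
  have p4: "prim m x4"
  proof (rule prim_unit[of k])
    show "1 \<le> k" "k \<le> m" using ck by auto
    have "x4 (k - 1) = x3 (k - 1)" "x4 k = x3 k" using ck unfolding x4_def by auto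
    then show "x4 (k - 1) - x4 k = 1 \<or> x4 k - x4 (k - 1) = 1" using pu3 by simp
  qed
  have t4: "x4 (Suc m) = x4 (Suc (Suc m))" unfolding x4_def by simp
  have o4: "\<forall>j>Suc (Suc m). x4 j = x j" using x1(2) unfolding x4_def x3_def x2_def by auto
  have "rch (Suc (Suc m)) x x4"
    using rch_trans[OF r4 rch_trans[OF rch_mono[OF r3] rch_trans[OF r2 x1(1)]]] by simp
  then show ?thesis using p4 t4 o4 by blast
qed

lemma STEP: assumes "prim (Suc (Suc m)) x" "prim (Suc (Suc m)) y" "alt (Suc (Suc m)) x = alt (Suc (Suc m)) y"
  "nodd (Suc (Suc m)) x = nodd (Suc (Suc m)) y" "\<forall>j>Suc (Suc m). x j = y j"
  shows "rch (Suc (Suc m)) x y"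
proof -
  have SFprops: "alt m a = alt (Suc (Suc m)) a \<and>
      nodd (Suc (Suc m)) a = nodd m a + (if odd (a (Suc m)) then 2 else 0)"
    if "a (Suc m) = a (Suc (Suc m))" for a
    using alt_SS[OF ev, of a] nodd_SS[of m a] that by simp
  have main: "rch (Suc (Suc m)) a b"
    if A: "prim m a" "prim m b" "a (Suc m) = a (Suc (Suc m))" "b (Suc m) = b (Suc (Suc m))"
      "alt (Suc (Suc m)) a = alt (Suc (Suc m)) b" "nodd (Suc (Suc m)) a = nodd (Suc (Suc m)) b"
      "\<forall>j>Suc (Suc m). a j = b j" "\<not> (even (a (Suc m)) \<and> odd (b (Suc m)))" for a b
  proof -
    have al: "alt m a = alt m b" using SFprops[OF A(3)] SFprops[OF A(4)] A(5) by simp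
    have nd: "nodd m a + (if odd (a (Suc m)) then 2 else 0) = nodd m b + (if odd (b (Suc m)) then 2 else 0)"
      using SFprops[OF A(3)] SFprops[OF A(4)] A(6) by simp
    show ?thesis
    proof (cases "odd (a (Suc m)) \<and> even (b (Suc m))")
      case False
      then have pe: "even (a (Suc m) - b (Suc m))" using A(8) by auto
      have "nodd m a = nodd m b" using nd False A(8) by (auto split: if_splits)
      then show ?thesis using COMP[OF A(1-4) pe al _ A(7)] by simp
    next
      case True
      then have nb: "nodd m b = nodd m a + 2" using nd by simp
      then have "nodd m a + 2 \<le> m" using prim_nodd[OF A(2)] by simp
      then obtain c where c: "rch (Suc (Suc m)) a c" "prim m c" "c (Suc m) = 0" "c (Suc (Suc m)) = 0"
        "alt m c = alt m a" "nodd m c = nodd m a + 2" "\<forall>j>Suc (Suc m). c j = a j"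
        using PT[OF A(1) refl A(3)[symmetric]] True by blast
      have pe: "even (c (Suc m) - b (Suc m))" using c(3) True by simp
      have "rch (Suc (Suc m)) c b"
        by (rule COMP[OF c(2) A(2)]) (use c A(4,7) al nb pe in auto)
      then show ?thesis using c(1) rch_trans by blast
    qed
  qed
  obtain x' where x': "rch (Suc (Suc m)) x x'" "prim m x'" "x' (Suc m) = x' (Suc (Suc m))" "\<forall>j>Suc (Suc m). x' j = x j"
    using SF[OF assms(1)] by blast
  obtain y' where y': "rch (Suc (Suc m)) y y'" "prim m y'" "y' (Suc m) = y' (Suc (Suc m))" "\<forall>j>Suc (Suc m). y' j = y j"
    using SF[OF assms(2)] by blast
  have ia: "alt (Suc (Suc m)) x' = alt (Suc (Suc m)) y'" using rch_inv[OF x'(1)] rch_inv[OF y'(1)] assms(3) by simp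
  have ib: "nodd (Suc (Suc m)) x' = nodd (Suc (Suc m)) y'" using rch_inv[OF x'(1)] rch_inv[OF y'(1)] assms(4) by simp
  have ic: "\<forall>j>Suc (Suc m). x' j = y' j" using x'(4) y'(4) assms(5) by simp
  have "rch (Suc (Suc m)) x' y'"
  proof (cases "even (x' (Suc m)) \<and> odd (y' (Suc m))")
    case False
    then show ?thesis using main[OF x'(2) y'(2) x'(3) y'(3) ia ib ic] by blast
  next
    case True
    then have "rch (Suc (Suc m)) y' x'" using main[OF y'(2) x'(2) y'(3) x'(3) ia[symmetric] ib[symmetric]] ic by auto
    then show ?thesis by (rule rch_sym)
  qed
  then show ?thesis using x'(1) rch_sym[OF y'(1)] rch_trans by blast
qed

end

lemma Cthm: "1 \<le> (s::nat) \<Longrightarrow> prim (2*s) x \<Longrightarrow> prim (2*s) y \<Longrightarrow> alt (2*s) x = alt (2*s) y \<Longrightarrow>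
  nodd (2*s) x = nodd (2*s) y \<Longrightarrow> (\<forall>j>2*s. x j = y j) \<Longrightarrow> rch (2*s) (x::nat\<Rightarrow>int) y"
proof (induction s arbitrary: x y rule: nat_induct_at_least)
  case base
  have a2: "alt 2 z = z 0 - z 1 + z 2" for z
    using alt_SS[of 0 z] by (simp add: alt_def numeral_2_eq_2)
  show ?case
  proof (rule rch_window[of 1])
    show "AL 1 y = AL 1 x" using base a2[of x] a2[of y] by (simp add: AL_def numeral_2_eq_2)
    show "gcd (D1 1 y) (D2 1 y) = gcd (D1 1 x) (D2 1 x)" using prim2_gcd base by simp
    fix l :: nat assume "l \<noteq> 1 - 1" "l \<noteq> 1" "l \<noteq> 1 + 1"
    then have "l > 2 * 1" by simp
    then show "y l = x l" using base by simp
  qed simp_all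
next
  case (Suc s)
  have e: "2 * Suc s = Suc (Suc (2 * s))" by simp
  have IH: "\<And>x y. prim (2*s) x \<Longrightarrow> prim (2*s) y \<Longrightarrow> alt (2*s) x = alt (2*s) y \<Longrightarrow>
      nodd (2*s) x = nodd (2*s) y \<Longrightarrow> (\<forall>j>2*s. x j = y j) \<Longrightarrow> rch (2*s) x y"
    using Suc.IH by blast
  have "even (2 * s)" "2 \<le> 2 * s" using Suc.hyps by auto
  from STEP[of "2*s", OF IH this] Suc.prems show ?case unfolding e by blast
qed

definition kk :: "nat \<Rightarrow> (nat \<Rightarrow> int) \<Rightarrow> (nat \<Rightarrow> int)" where
  "kk n x = (\<lambda>j. if 1 \<le> j \<and> j \<le> n then x j - x 0 else 0)"

definition siginv :: "nat \<Rightarrow> nat \<Rightarrow> (nat \<Rightarrow> int) \<Rightarrow> (nat \<Rightarrow> int)" where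
  "siginv n i k =
     (if i = 1 then (\<lambda>j. if 1 < j \<and> j \<le> n then k j - k 1 else k j)
      else (\<lambda>j. if j = i - 1 then k i else if j = i then 2 * k i - k (i - 1) else k j))"

lemma kk_vecs: "kk n x \<in> vecs n"
  unfolding kk_def vecs_def by auto

lemma kk_self: "k \<in> vecs n \<Longrightarrow> kk n k = k"
  unfolding kk_def vecs_def by (intro ext) auto

lemma sigma_kk: assumes "1 \<le> i" "i \<le> n" shows "kk n (mv i 1 y) = sigma n i (kk n y)"
proof (rule ext)
  fix j
  show "kk n (mv i 1 y) j = sigma n i (kk n y) j"
  proof (cases "i = 1")
    case True
    then show ?thesis using assms unfolding kk_def mv_def sigma_def by auto
  next
    case False
    then show ?thesis using assms unfolding kk_def mv_def sigma_def by auto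
  qed
qed

lemma siginv_kk: assumes "1 \<le> i" "i \<le> n" shows "kk n (mv i (-1) y) = siginv n i (kk n y)"
proof (rule ext)
  fix j
  show "kk n (mv i (-1) y) j = siginv n i (kk n y) j"
  proof (cases "i = 1")
    case True
    then show ?thesis using assms unfolding kk_def mv_def siginv_def by auto
  next
    case False
    then show ?thesis using assms unfolding kk_def mv_def siginv_def by auto
  qed
qed

lemma sigma_props: assumes "1 \<le> i" "i \<le> n" "k \<in> vecs n"
  shows "sigma n i k \<in> vecs n" "siginv n i k \<in> vecs n" "siginv n i (sigma n i k) = k" "sigma n i (siginv n i k) = k"
proof -
  have kk: "kk n k = k" using kk_self assms(3) by blast
  have k0: "k 0 = 0" using assms(3) unfolding vecs_def by auto
  show "sigma n i k \<in> vecs n" using sigma_kk[OF assms(1,2), of k] kk kk_vecs by metis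
  show "siginv n i k \<in> vecs n" using siginv_kk[OF assms(1,2), of k] kk kk_vecs by metis
  have "siginv n i (sigma n i k) = siginv n i (kk n (mv i 1 k))" using sigma_kk[OF assms(1,2), of k] kk by simp
  also have "\<dots> = kk n (mv i (-1) (mv i 1 k))" using siginv_kk[OF assms(1,2)] by simp
  also have "\<dots> = k" using assms(1) kk by (simp add: mv_add mv_0)
  finally show "siginv n i (sigma n i k) = k" .
  have "sigma n i (siginv n i k) = sigma n i (kk n (mv i (-1) k))" using siginv_kk[OF assms(1,2), of k] kk by simp
  also have "\<dots> = kk n (mv i 1 (mv i (-1) k))" using sigma_kk[OF assms(1,2)] by simp
  also have "\<dots> = k" using assms(1) kk by (simp add: mv_add mv_0)
  finally show "sigma n i (siginv n i k) = k" .
qed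

lemma inv_sigma: assumes "1 \<le> i" "i \<le> n" "k \<in> vecs n"
  shows "inv_into (vecs n) (sigma n i) k = siginv n i k"
proof (rule inv_into_f_eq)
  show "inj_on (sigma n i) (vecs n)"
    by (rule inj_on_inverseI[of _ "siginv n i"]) (use sigma_props assms(1,2) in blast)
  show "siginv n i k \<in> vecs n" "sigma n i (siginv n i k) = k" using sigma_props assms by blast+
qed

lemma R2G: "rch n x y \<Longrightarrow> \<exists>g\<in>grp n. g (kk n x) = kk n y"
proof (induction rule: rch.induct)
  case (rch_refl x) then show ?case by (intro bexI[of _ id]) (auto intro: grp.grp_id)
next
  case (rch_step x y i e)
  then obtain g where g: "g \<in> grp n" "g (kk n x) = kk n y" by blast
  have i: "i \<in> {1..n}" using rch_step by simp
  show ?case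
  proof (cases "e = 1")
    case True
    have "(sigma n i \<circ> g) (kk n x) = kk n (mv i e y)" using g sigma_kk rch_step True by simp
    then show ?thesis using grp.grp_gen[OF g(1) i] by blast
  next
    case False
    then have e: "e = -1" using rch_step by simp
    have "(inv_into (vecs n) (sigma n i) \<circ> g) (kk n x) = kk n (mv i e y)"
      using g inv_sigma[OF _ _ kk_vecs] siginv_kk rch_step e by simp
    then show ?thesis using grp.grp_inv[OF g(1) i] by blast
  qed
qed

lemma G2R: "g \<in> grp n \<Longrightarrow> k \<in> vecs n \<Longrightarrow> \<exists>y. rch n k y \<and> kk n y = g k"
proof (induction rule: grp.induct)
  case grp_id then show ?case using kk_self rch.rch_refl by fastforce
next
  case (grp_gen g i)
  then obtain y where y: "rch n k y" "kk n y = g k" by blast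
  have "rch n k (mv i 1 y)" using y(1) grp_gen by (intro rch.rch_step) auto
  moreover have "kk n (mv i 1 y) = (sigma n i \<circ> g) k" using sigma_kk y grp_gen by simp
  ultimately show ?case by blast
next
  case (grp_inv g i)
  then obtain y where y: "rch n k y" "kk n y = g k" by blast
  have gv: "g k \<in> vecs n" using y(2) kk_vecs by metis
  have "rch n k (mv i (-1) y)" using y(1) grp_inv by (intro rch.rch_step) auto
  moreover have "kk n (mv i (-1) y) = (inv_into (vecs n) (sigma n i) \<circ> g) k"
    using siginv_kk inv_sigma[OF _ _ gv] y grp_inv by simp
  ultimately show ?case by blast
qed

lemma grp_comp: "h \<in> grp n \<Longrightarrow> g \<in> grp n \<Longrightarrow> h \<circ> g \<in> grp n"
proof (induction rule: grp.induct)
  case grp_id then show ?case by simp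
next
  case (grp_gen h i)
  have "h \<circ> g \<in> grp n" using grp_gen.IH grp_gen.prems by blast
  then have "sigma n i \<circ> (h \<circ> g) \<in> grp n" using grp_gen.hyps(2) by (rule grp.grp_gen)
  then show ?case unfolding comp_assoc .
next
  case (grp_inv h i)
  have "h \<circ> g \<in> grp n" using grp_inv.IH grp_inv.prems by blast
  then have "inv_into (vecs n) (sigma n i) \<circ> (h \<circ> g) \<in> grp n" using grp_inv.hyps(2) by (rule grp.grp_inv)
  then show ?case unfolding comp_assoc .
qed

lemma Gcd_eq_cd: fixes A B :: "int set"
  assumes "\<And>d. (\<forall>a\<in>A. d dvd a) \<longleftrightarrow> (\<forall>b\<in>B. d dvd b)" shows "Gcd A = Gcd B"
proof -
  have "\<forall>a\<in>A. Gcd A dvd a" by (auto intro: Gcd_dvd)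
  then have "\<forall>b\<in>B. Gcd A dvd b" using assms by blast
  then have 1: "Gcd A dvd Gcd B" by (auto intro: Gcd_greatest)
  have "\<forall>b\<in>B. Gcd B dvd b" by (auto intro: Gcd_dvd)
  then have "\<forall>a\<in>A. Gcd B dvd a" using assms by blast
  then have 2: "Gcd B dvd Gcd A" by (auto intro: Gcd_greatest)
  show ?thesis using zdvd_antisym_nonneg[OF Gcd_int_greater_eq_0 Gcd_int_greater_eq_0 1 2] .
qed

lemma gam_kk: "gam n (kk n x) = Gcd ((\<lambda>j. x j - x 0) ` {1..n})"
  unfolding gam_def kk_def by (rule arg_cong[where f=Gcd]) (auto intro: image_cong)

lemma gam_rch: assumes "rch n x y" shows "gam n (kk n y) = gam n (kk n x)"
  unfolding gam_kk
proof (rule Gcd_eq_cd)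
  fix d
  have "(\<forall>a\<in>(\<lambda>j. z j - z 0) ` {1..n}. d dvd a) \<longleftrightarrow> (\<forall>j\<le>n. d dvd z j - z 0)" for z :: "nat \<Rightarrow> int"
  proof
    assume H: "\<forall>a\<in>(\<lambda>j. z j - z 0) ` {1..n}. d dvd a"
    show "\<forall>j\<le>n. d dvd z j - z 0"
    proof (intro allI impI)
      fix j assume "j \<le> n"
      show "d dvd z j - z 0"
      proof (cases "j = 0")
        case False then show ?thesis using H \<open>j \<le> n\<close> by auto
      qed simp
    qed
  qed auto
  then show "(\<forall>a\<in>(\<lambda>j. y j - y 0) ` {1..n}. d dvd a) \<longleftrightarrow> (\<forall>b\<in>(\<lambda>j. x j - x 0) ` {1..n}. d dvd b)"
    using rch_cd[OF assms, of d] by simp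
qed

lemma alph_kk: "alph n (kk n x) = card {i \<in> {1..n}. odd ((x i - x 0) div gam n (kk n x))}"
  unfolding alph_def by (rule arg_cong[where f=card]) (auto simp: kk_def)

lemma QP: "\<bar>2 * int (card {j \<in> {1..n}. odd (w j - w 0)}) - int n - 1\<bar> = \<bar>2 * int (nodd n w) - int n - 1\<bar>"
proof (cases "even (w 0)")
  case True
  have "{j \<in> {1..n}. odd (w j - w 0)} = {j. j \<le> n \<and> odd (w j)}"
  proof (intro set_eqI iffI)
    fix j assume "j \<in> {j. j \<le> n \<and> odd (w j)}"
    then have jo: "odd (w j)" by simp
    have "j \<noteq> 0"
    proof
      assume "j = 0" then show False using jo True by simp
    qed
    then show "j \<in> {j \<in> {1..n}. odd (w j - w 0)}" using True \<open>j \<in> _\<close> by auto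
  qed (use True in auto)
  then show ?thesis unfolding nodd_def by simp
next
  case False
  have "{j \<in> {1..n}. odd (w j - w 0)} = {j. j \<le> n \<and> even (w j)}"
  proof (intro set_eqI iffI)
    fix j assume "j \<in> {j. j \<le> n \<and> even (w j)}"
    then have jo: "even (w j)" by simp
    have "j \<noteq> 0"
    proof
      assume "j = 0" then show False using jo False by simp
    qed
    then show "j \<in> {j \<in> {1..n}. odd (w j - w 0)}" using False \<open>j \<in> _\<close> by auto
  qed (use False in auto)
  moreover have "card {j. j \<le> n \<and> even (w j)} + nodd n w = Suc n"
  proof -
    have "{j. j \<le> n \<and> even (w j)} \<union> {j. j \<le> n \<and> odd (w j)} = {..n}" by auto
    moreover have "{j. j \<le> n \<and> even (w j)} \<inter> {j. j \<le> n \<and> odd (w j)} = {}" by auto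
    moreover have "finite {j. j \<le> n \<and> even (w j)}" "finite {j. j \<le> n \<and> odd (w j)}" by auto
    ultimately show ?thesis unfolding nodd_def by (metis card_Un_disjoint card_atMost)
  qed
  ultimately show ?thesis by simp
qed

lemma delt_step: assumes "1 \<le> i" "i \<le> 2*s" "e = 1 \<or> e = -1"
  shows "delt s (kk (2*s) (mv i e x)) = delt s (kk (2*s) x)"
proof -
  define n where "n = 2 * s"
  have rr: "rch n x (mv i e x)" using assms unfolding n_def by (intro rch.rch_step rch.rch_refl) auto
  define \<gamma> where "\<gamma> = gam n (kk n x)"
  have g': "gam n (kk n (mv i e x)) = \<gamma>" unfolding \<gamma>_def by (rule gam_rch[OF rr])
  have dform: "delt s k = \<bar>2 * int (alph n k) - int n - 1\<bar>" for k unfolding delt_def n_def by simp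
  show ?thesis
  proof (cases "\<gamma> = 0")
    case True
    have "alph n (kk n (mv i e x)) = 0" "alph n (kk n x) = 0"
      unfolding alph_kk g' \<gamma>_def[symmetric] True by simp_all
    then show ?thesis unfolding n_def[symmetric] dform by simp
  next
    case False
    define u where "u = (\<lambda>j. (x j - x 0) div \<gamma>)"
    have gdv: "\<gamma> dvd x j - x 0" if "j \<le> n" for j
    proof (cases "j = 0")
      case False
      then have "x j - x 0 \<in> (\<lambda>j. x j - x 0) ` {1..n}" using that by auto
      then show ?thesis unfolding \<gamma>_def gam_kk by (rule Gcd_dvd)
    qed simp
    have xu: "x j - x 0 = \<gamma> * u j" if "j \<le> n" for j
      using gdv[OF that] unfolding u_def by simp
    have D: "x (i - 1) - x i = \<gamma> * (u (i - 1) - u i)"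
      using xu[of "i - 1"] xu[of i] assms(2) unfolding n_def by (simp add: algebra_simps)
    have mvx: "mv i e x j - mv i e x 0 = \<gamma> * (mv i e u j - mv i e u 0)" if "j \<le> n" for j
    proof -
      have "mv i e x j - mv i e x 0 = (x j - x 0) + ((if j = i - 1 \<or> j = i then 1 else 0) - (if 0 = i - 1 \<or> 0 = i then 1 else 0)) * e * (x (i - 1) - x i)"
        unfolding mv_def by (auto simp: algebra_simps)
      also have "\<dots> = \<gamma> * ((u j - u 0) + ((if j = i - 1 \<or> j = i then 1 else 0) - (if 0 = i - 1 \<or> 0 = i then 1 else 0)) * e * (u (i - 1) - u i))"
        unfolding D xu[OF that] by (simp add: u_def algebra_simps)
      also have "(u j - u 0) + ((if j = i - 1 \<or> j = i then 1 else 0) - (if 0 = i - 1 \<or> 0 = i then 1 else 0)) * e * (u (i - 1) - u i)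
          = mv i e u j - mv i e u 0"
        unfolding mv_def by (auto simp: algebra_simps)
      finally show ?thesis .
    qed
    have A1: "alph n (kk n (mv i e x)) = card {j \<in> {1..n}. odd (mv i e u j - mv i e u 0)}"
      unfolding alph_kk g' using mvx False by (intro arg_cong[where f=card]) auto
    have u0: "u 0 = 0" unfolding u_def by simp
    have A2: "alph n (kk n x) = card {j \<in> {1..n}. odd (u j - u 0)}"
      unfolding alph_kk \<gamma>_def[symmetric] u0 u_def by simp
    have "nodd n (mv i e u) = nodd n u" using nodd_mv assms unfolding n_def by blast
    then show ?thesis unfolding n_def[symmetric] dform A1 A2 QP by simp
  qed
qed

lemma delt_rch: "rch (2*s) x y \<Longrightarrow> delt s (kk (2*s) y) = delt s (kk (2*s) x)"
proof (induction rule: rch.induct)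
  case (rch_step x y i e)
  then show ?case using delt_step[of i s e y] by simp
qed simp

lemma inv_grp: assumes "g \<in> grp (2*s)" "k \<in> vecs (2*s)"
  shows "gam (2*s) (g k) = gam (2*s) k" "delt s (g k) = delt s k"
proof -
  obtain y where y: "rch (2*s) k y" "kk (2*s) y = g k" using G2R[OF assms] by blast
  have kk: "kk (2*s) k = k" using kk_self assms(2) by blast
  show "gam (2*s) (g k) = gam (2*s) k" using gam_rch[OF y(1)] y(2) kk by simp
  show "delt s (g k) = delt s k" using delt_rch[OF y(1)] y(2) kk by simp
qed

lemma vec_norm: assumes "k \<in> vecs n" "k \<noteq> (\<lambda>_. 0)"
  defines "y \<equiv> (\<lambda>j. k j div gam n k)"
  shows "gam n k > 0" "\<forall>j. k j = gam n k * y j" "prim n y" "y 0 = 0" "alph n k = nodd n y"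
proof -
  define \<gamma> where "\<gamma> = gam n k"
  have kz: "\<And>j. j \<notin> {1..n} \<Longrightarrow> k j = 0" using assms(1) unfolding vecs_def by auto
  obtain j0 where j0: "k j0 \<noteq> 0" using assms(2) by auto
  then have j0n: "j0 \<in> {1..n}" using kz by auto
  have "\<gamma> \<noteq> 0"
  proof
    assume "\<gamma> = 0"
    then have "k ` {1..n} \<subseteq> {0}" unfolding \<gamma>_def gam_def by simp
    moreover have "k j0 \<in> k ` {1..n}" using j0n by simp
    ultimately show False using j0 by blast
  qed
  moreover have "\<gamma> \<ge> 0" unfolding \<gamma>_def gam_def by simp
  ultimately show gp: "gam n k > 0" unfolding \<gamma>_def by simp
  have gd: "\<gamma> dvd k j" for j
  proof (cases "j \<in> {1..n}")
    case True then show ?thesis unfolding \<gamma>_def gam_def by (auto intro: Gcd_dvd)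
  qed (simp add: kz)
  show ky: "\<forall>j. k j = gam n k * y j" using gd unfolding y_def \<gamma>_def by simp
  show y0: "y 0 = 0" unfolding y_def using kz[of 0] by simp
  show "prim n y" unfolding prim_def
  proof (intro allI impI)
    fix d assume H: "\<forall>i\<le>n. d dvd y i - y 0"
    have "d * \<gamma> dvd b" if bb: "b \<in> k ` {1..n}" for b
    proof -
      obtain i where i: "i \<in> {1..n}" "b = k i" using bb by auto
      have "d dvd y i" using H i y0 by auto
      then have "d * \<gamma> dvd y i * \<gamma>" by simp
      then show ?thesis using ky i unfolding \<gamma>_def by (simp add: mult.commute)
    qed
    then have "d * \<gamma> dvd Gcd (k ` {1..n})" by (rule Gcd_greatest)
    then have "d * \<gamma> dvd 1 * \<gamma>" unfolding \<gamma>_def gam_def by simp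
    then show "d dvd 1" using \<open>\<gamma> \<noteq> 0\<close> by (simp only: dvd_mult_cancel_right) simp
  qed
  show "alph n k = nodd n y"
    unfolding alph_def nodd_def y_def
  proof (rule arg_cong[where f=card], intro set_eqI iffI)
    fix i assume "i \<in> {i. i \<le> n \<and> odd (k i div gam n k)}"
    moreover then have "i \<noteq> 0" using kz[of 0] by (cases "i = 0") auto
    ultimately show "i \<in> {i \<in> {1..n}. odd (k i div gam n k)}" by auto
  qed auto
qed

lemma alt_shift: "even n \<Longrightarrow> alt n (\<lambda>j. w j + t) = alt n w + t"
proof -
  assume "even n"
  have "alt n (\<lambda>j. w j + t) = (\<Sum>i\<le>n. (-1)^i * w i + (-1)^i * t)"
    unfolding alt_def by (simp add: algebra_simps)
  also have "\<dots> = alt n w + (\<Sum>i\<le>n. (-1)^i * t)" unfolding alt_def by (rule sum.distrib)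
  also have "(\<Sum>i\<le>n. (-1::int)^i * t) = (\<Sum>i\<le>n. (-1)^i) * t" by (rule sum_distrib_right[symmetric])
  finally have "alt n (\<lambda>j. w j + t) = alt n w + (\<Sum>i\<le>n. (-1)^i) * t" .
  then show ?thesis using sum_sign_atMost[of n] \<open>even n\<close> by simp
qed

lemma nodd_shift: "nodd n (\<lambda>j. w j + t) = (if even t then nodd n w else Suc n - nodd n w)"
proof (cases "even t")
  case True
  then show ?thesis unfolding nodd_def by simp
next
  case False
  have "{j. j \<le> n \<and> odd (w j + t)} = {j. j \<le> n \<and> even (w j)}" using False by auto
  moreover have "card {j. j \<le> n \<and> even (w j)} + nodd n w = Suc n"
  proof -
    have "{j. j \<le> n \<and> even (w j)} \<union> {j. j \<le> n \<and> odd (w j)} = {..n}" by auto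
    moreover have "{j. j \<le> n \<and> even (w j)} \<inter> {j. j \<le> n \<and> odd (w j)} = {}" by auto
    moreover have "finite {j. j \<le> n \<and> even (w j)}" "finite {j. j \<le> n \<and> odd (w j)}" by auto
    ultimately show ?thesis unfolding nodd_def by (metis card_Un_disjoint card_atMost)
  qed
  ultimately show ?thesis using False unfolding nodd_def by simp
qed

lemma INJ: assumes "1 \<le> s" "k \<in> vecs (2*s) - {\<lambda>_. 0}" "k' \<in> vecs (2*s) - {\<lambda>_. 0}"
  "gam (2*s) k = gam (2*s) k'" "delt s k = delt s k'"
  shows "\<exists>g\<in>grp (2*s). g k = k'"
proof -
  define n where "n = 2 * s"
  define \<gamma> where "\<gamma> = gam n k"
  define y where "y = (\<lambda>j. k j div gam n k)"
  define y' where "y' = (\<lambda>j. k' j div gam n k')"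
  have kv: "k \<in> vecs n" "k \<noteq> (\<lambda>_. 0)" "k' \<in> vecs n" "k' \<noteq> (\<lambda>_. 0)" using assms unfolding n_def by auto
  note N0 = vec_norm[OF kv(1,2)]
  note N0' = vec_norm[OF kv(3,4)]
  have N: "True" "\<forall>j. k j = gam n k * y j" "prim n y" "y 0 = 0" "alph n k = nodd n y"
    using N0 unfolding y_def by auto
  have N': "True" "\<forall>j. k' j = gam n k' * y' j" "prim n y'" "y' 0 = 0" "alph n k' = nodd n y'"
    using N0' unfolding y'_def by auto
  have gg: "gam n k' = \<gamma>" using assms(4) unfolding \<gamma>_def n_def by simp
  define \<alpha> where "\<alpha> = nodd n y"
  define \<alpha>' where "\<alpha>' = nodd n y'"
  have dd: "\<bar>2 * int \<alpha> - int n - 1\<bar> = \<bar>2 * int \<alpha>' - int n - 1\<bar>"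
    using assms(5) N(5) N'(5) unfolding delt_def \<alpha>_def \<alpha>'_def n_def by simp
  define t where "t = alt n y - alt n y'"
  define z where "z = (\<lambda>j. if j \<le> n then y' j + t else y j)"
  have ev: "even n" unfolding n_def by simp
  have ez: "\<And>j. j \<le> n \<Longrightarrow> z j = y' j + t" unfolding z_def by simp
  have altz: "alt n z = alt n y" using alt_cong[OF ez, of n] alt_shift[OF ev, of y' t] unfolding t_def by simp
  have pa: "even (alt n y - int \<alpha>)" "even (alt n y' - int \<alpha>')" unfolding \<alpha>_def \<alpha>'_def by (rule alt_nodd_parity)+
  have a1: "1 \<le> \<alpha>" "\<alpha> \<le> n" "1 \<le> \<alpha>'" "\<alpha>' \<le> n" using prim_nodd N(3) N'(3) unfolding \<alpha>_def \<alpha>'_def by auto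
  have noddz: "nodd n z = \<alpha>"
  proof -
    have nz: "nodd n z = (if even t then \<alpha>' else Suc n - \<alpha>')"
      using nodd_cong[OF ez, of n] nodd_shift[of n y' t] unfolding \<alpha>'_def by simp
    have cases: "\<alpha> = \<alpha>' \<or> \<alpha> + \<alpha>' = Suc n" using dd a1 by (auto simp: abs_if split: if_splits)
    have tp: "even t \<longleftrightarrow> even (int \<alpha> - int \<alpha>')" using pa unfolding t_def
      by (metis (no_types, opaque_lifting) diff_diff_eq2 diff_add_cancel even_add)
    show ?thesis
    proof (cases "even t")
      case True
      then have "even (int \<alpha> + int \<alpha>')" using tp
        by (metis diff_add_cancel even_add mult_2 dvd_triv_left add.commute diff_diff_eq2 )
      moreover have "odd (int (Suc n))" using ev by simp
      ultimately have "\<alpha> = \<alpha>'" using cases by (metis of_nat_add)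
      then show ?thesis using nz True by simp
    next
      case False
      then have "\<alpha> \<noteq> \<alpha>'" using tp by auto
      then show ?thesis using nz False cases by simp
    qed
  qed
  have primz: "prim n z"
  proof -
    have "prim n z = prim n y'" unfolding prim_def using ez by auto
    then show ?thesis using N'(3) by simp
  qed
  have "rch n y z"
    using Cthm[OF assms(1), of y z, folded n_def] N(3) primz altz noddz unfolding \<alpha>_def z_def by auto
  then have R: "rch n (\<lambda>l. if l \<le> n then 0 + \<gamma> * y l else 0) (\<lambda>l. if l \<le> n then 0 + \<gamma> * z l else 0)"
    by (rule rch_scale)
  have kY: "kk n (\<lambda>l. if l \<le> n then 0 + \<gamma> * y l else 0) = k"
  proof (rule ext)
    fix j
    show "kk n (\<lambda>l. if l \<le> n then 0 + \<gamma> * y l else 0) j = k j"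
      using N(2,4) kv(1) unfolding kk_def vecs_def \<gamma>_def by auto
  qed
  have kZ: "kk n (\<lambda>l. if l \<le> n then 0 + \<gamma> * z l else 0) = k'"
  proof (rule ext)
    fix j
    have "\<gamma> * z j - \<gamma> * z 0 = k' j" if "j \<le> n"
      using N'(2,4) that gg unfolding z_def by (simp add: algebra_simps)
    then show "kk n (\<lambda>l. if l \<le> n then 0 + \<gamma> * z l else 0) j = k' j"
      using kv(3) unfolding kk_def vecs_def by auto
  qed
  show ?thesis using R2G[OF R] kY kZ unfolding n_def by simp
qed

lemma RANGE: assumes "1 \<le> s" "k \<in> vecs (2*s) - {\<lambda>_. 0}"
  shows "gam (2*s) k > 0 \<and> odd (delt s k) \<and> 1 \<le> delt s k \<and> delt s k \<le> 2 * int s - 1"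
proof -
  have kv: "k \<in> vecs (2*s)" "k \<noteq> (\<lambda>_. 0)" using assms by auto
  note N = vec_norm[OF kv]
  define \<alpha> where "\<alpha> = alph (2*s) k"
  have a: "1 \<le> \<alpha>" "\<alpha> \<le> 2 * s" using prim_nodd[OF N(3)] N(5) unfolding \<alpha>_def by auto
  define v where "v = 2 * int \<alpha> - 2 * int s - 1"
  have dv: "delt s k = \<bar>v\<bar>" unfolding delt_def v_def \<alpha>_def by simp
  have ov: "odd v" unfolding v_def by simp
  have "odd \<bar>v\<bar>" using ov by simp
  moreover have "\<bar>v\<bar> \<ge> 1" using ov by (cases "v = 0") auto
  moreover have "\<bar>v\<bar> \<le> 2 * int s - 1" using a unfolding v_def by auto
  ultimately show ?thesis using N(1) dv by simp
qed

lemma EXIST: assumes "1 \<le> s" "g0 > 0" "odd d" "1 \<le> d" "d \<le> 2 * int s - 1"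
  shows "\<exists>k\<in>vecs (2*s) - {\<lambda>_. 0}. gam (2*s) k = g0 \<and> delt s k = d"
proof -
  have "even (2 * int s + 1 - d)" using assms(3) by simp
  then obtain q where q: "2 * int s + 1 - d = 2 * q" by blast
  define \<alpha> where "\<alpha> = nat q"
  have qa: "int \<alpha> = q" "1 \<le> \<alpha>" "\<alpha> \<le> s" using q assms(4,5) unfolding \<alpha>_def by auto
  define k where "k = (\<lambda>j::nat. if 1 \<le> j \<and> j \<le> \<alpha> then g0 else 0)"
  have kv: "k \<in> vecs (2*s)" unfolding k_def vecs_def using qa by auto
  have k1: "k 1 = g0" unfolding k_def using qa by simp
  have kne: "k \<noteq> (\<lambda>_. 0)"
  proof
    assume "k = (\<lambda>_. 0)"
    then have "k 1 = 0" by simp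
    then show False using k1 assms(2) by simp
  qed
  have img: "k ` {1..2*s} = {g0, 0}"
  proof
    show "k ` {1..2*s} \<subseteq> {g0, 0}" unfolding k_def by auto
    have "1 \<in> {1..2*s}" "2 * s \<in> {1..2*s}" using assms(1) by auto
    moreover have "k (2 * s) = 0" unfolding k_def using qa assms(1) by auto
    ultimately have "g0 \<in> k ` {1..2*s}" "0 \<in> k ` {1..2*s}" using k1 by (auto intro: image_eqI[symmetric])
    then show "{g0, 0} \<subseteq> k ` {1..2*s}" by blast
  qed
  have gk: "gam (2*s) k = g0" unfolding gam_def img using assms(2) by simp
  have "{i \<in> {1..2*s}. odd (k i div gam (2*s) k)} = {i \<in> {1..2*s}. odd (k i div g0)}"
    using gk by simp
  also have "\<dots> = {1..\<alpha>}" unfolding k_def using assms(2) qa by auto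
  finally have "{i \<in> {1..2*s}. odd (k i div gam (2*s) k)} = {1..\<alpha>}" .
  then have "alph (2*s) k = \<alpha>" unfolding alph_def by simp
  then have "delt s k = d" unfolding delt_def using qa q by simp
  then show ?thesis using kv kne gk by blast
qed

theorem mainTheorem5:
  fixes s :: nat
  assumes "s \<ge> 1"
  shows "\<exists>f. bij_betw f (orbits (2*s))
                {(g :: int, d :: int). g > 0 \<and> odd d \<and> 1 \<le> d \<and> d \<le> 2 * int s - 1}
          \<and> (\<forall>k \<in> vecs (2*s) - {\<lambda>_. 0}. f (orbit (2*s) k) = (gam (2*s) k, delt s k))"
proof -
  define n where "n = 2 * s"
  define V where "V = vecs n - {\<lambda>_. 0}"
  define rep where "rep Q = (SOME k. k \<in> V \<and> Q = orbit n k)" for Q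
  define f where "f Q = (gam n (rep Q), delt s (rep Q))" for Q
  have inorb: "k \<in> orbit n k" for k
  proof -
    have "k = id k \<and> id \<in> grp n" by (simp add: grp.grp_id)
    then show ?thesis unfolding orbit_def by blast
  qed
  have Kf: "f (orbit n k) = (gam n k, delt s k)" if kV: "k \<in> V" for k
  proof -
    have "\<exists>k'. k' \<in> V \<and> orbit n k = orbit n k'" using kV by blast
    then have r: "rep (orbit n k) \<in> V \<and> orbit n k = orbit n (rep (orbit n k))"
      unfolding rep_def by (rule someI_ex)
    then have eq: "orbit n (rep (orbit n k)) = orbit n k" by simp
    have X: "rep (orbit n k) \<in> orbit n (rep (orbit n k))" by (rule inorb)
    then have "rep (orbit n k) \<in> orbit n k" by (simp only: eq)
    then obtain g where g: "g \<in> grp n" "rep (orbit n k) = g k" unfolding orbit_def by blast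
    have "k \<in> vecs n" using kV unfolding V_def by simp
    then show ?thesis unfolding f_def g(2) using inv_grp[of g s k] g(1) unfolding n_def by simp
  qed
  have orb_sub: "orbit n k2 \<subseteq> orbit n k1" if "g \<in> grp n" "g k1 = k2" for g k1 k2
  proof
    fix x assume "x \<in> orbit n k2"
    then obtain h where h: "h \<in> grp n" "x = h k2" unfolding orbit_def by blast
    then have "x = (h \<circ> g) k1" using that by simp
    moreover have "h \<circ> g \<in> grp n" using grp_comp h(1) that(1) by blast
    ultimately show "x \<in> orbit n k1" unfolding orbit_def by blast
  qed
  have orbitsV: "orbits n = orbit n ` V" unfolding orbits_def V_def by simp
  have inj: "inj_on f (orbits n)"
  proof (rule inj_onI)
    fix Q1 Q2 assume QQ: "Q1 \<in> orbits n" "Q2 \<in> orbits n" "f Q1 = f Q2"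
    obtain k1 k2 where k: "k1 \<in> V" "k2 \<in> V" "Q1 = orbit n k1" "Q2 = orbit n k2" using QQ(1,2) orbitsV by auto
    have eq: "gam n k1 = gam n k2" "delt s k1 = delt s k2" using QQ(3) Kf[OF k(1)] Kf[OF k(2)] k(3,4) by auto
    obtain g where g: "g \<in> grp n" "g k1 = k2"
      using INJ[OF assms, of k1 k2] k eq unfolding n_def V_def by auto
    obtain h where h: "h \<in> grp n" "h k2 = k1"
      using INJ[OF assms, of k2 k1] k eq unfolding n_def V_def by auto
    show "Q1 = Q2" using orb_sub[OF g] orb_sub[OF h] k(3,4) by blast
  qed
  have img: "f ` orbits n = {(g :: int, d :: int). g > 0 \<and> odd d \<and> 1 \<le> d \<and> d \<le> 2 * int s - 1}"
  proof
    show "f ` orbits n \<subseteq> {(g::int, d::int). 0 < g \<and> odd d \<and> 1 \<le> d \<and> d \<le> 2 * int s - 1}"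
    proof
      fix p assume "p \<in> f ` orbits n"
      then obtain k where k: "k \<in> V" "p = f (orbit n k)" using orbitsV by auto
      then have "p = (gam n k, delt s k)" using Kf by simp
      then show "p \<in> {(g::int, d::int). 0 < g \<and> odd d \<and> 1 \<le> d \<and> d \<le> 2 * int s - 1}"
        using RANGE[OF assms, of k] k(1) unfolding V_def n_def by simp
    qed
    show "{(g::int, d::int). 0 < g \<and> odd d \<and> 1 \<le> d \<and> d \<le> 2 * int s - 1} \<subseteq> f ` orbits n"
    proof
      fix p assume "p \<in> {(g::int, d::int). 0 < g \<and> odd d \<and> 1 \<le> d \<and> d \<le> 2 * int s - 1}"
      then obtain g0 d :: int where p: "p = (g0, d)" "0 < g0" "odd d" "1 \<le> d" "d \<le> 2 * int s - 1" by blast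
      obtain k where k: "k \<in> V" "gam n k = g0" "delt s k = d"
        using EXIST[OF assms p(2-5)] unfolding V_def n_def by blast
      have "p = f (orbit n k)" using Kf[OF k(1)] k p by simp
      moreover have "orbit n k \<in> orbits n" using k(1) orbitsV by simp
      ultimately show "p \<in> f ` orbits n" by blast
    qed
  qed
  have "bij_betw f (orbits n) {(g :: int, d :: int). g > 0 \<and> odd d \<and> 1 \<le> d \<and> d \<le> 2 * int s - 1}"
    unfolding bij_betw_def using inj img by blast
  moreover have "\<forall>k \<in> V. f (orbit n k) = (gam n k, delt s k)" using Kf by blast
  ultimately show ?thesis unfolding n_def V_def by blast
qed

end
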